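(* Let $N$ be a Niemeier lattice with roots, $N^{-}$ the lattice $N$ with negated form $\langle\ ,\ \rangle^{-}_N$, $R$ the set of $(-2)$-vectors of $N^{-}$, and $\Theta=\Theta_1\sqcup\dots\sqcup\Theta_K$ a simple root system of $\langle R\rangle$ decomposed into its connected components. Put $A_i=\langle\Theta_i\rangle^\vee/\langle\Theta_i\rangle$, and regard $N^{-}/\langle R\rangle\subset A_1\times\dots\times A_K$ via $N^{-}\subset\langle R\rangle^\vee=\langle\Theta_1\rangle^\vee\oplus\dots\oplus\langle\Theta_K\rangle^\vee$. For a codeword $\gamma\in N^{-}/\langle R\rangle$ with components $\gamma_i\in A_i$, let $\tilde\gamma_i\in\langle\Theta_i\rangle^\vee$ be the canonical representative of $\gamma_i$ and put $v_\gamma=\tilde\gamma_1+\dots+\tilde\gamma_K\in\langle R\rangle^\vee$. Then $v_\gamma\in N^{-}$.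
   Context: A Niemeier lattice is an even unimodular positive-definite lattice of rank $24$; "with roots" means it has vectors of norm $2$. A simple root system of $\langle R\rangle$ is a subset $\Theta\subset R$ forming a $\mathbb{Z}$-basis of $\langle R\rangle$ whose dual graph (edge between $r\ne r'$ iff $\langle r,r'\rangle^{-}_N=1$; distinct elements have $\langle r,r'\rangle^-_N\in\{0,1\}$) is a disjoint union of ordinary $ADE$ Dynkin diagrams; $\Theta_i$ are the vertex sets of its connected components. For $M$ a lattice, $M^\vee=\{x\in M\otimes\mathbb{Q}:\langle x,v\rangle\in\mathbb{Z}\ \forall v\in M\}$. Canonical representative: let $\Sigma=\{r_1,\dots,r_k\}$ be a connected simple root system (e.g. some $\Theta_i$), let $\mu=\sum_j m(r_j)r_j$ be the highest root of $\langle\Sigma\rangle$ with respect to $\Sigma$ (coefficients $m(r_j)$ positive integers), let $J(\Sigma)=\{j:m(r_j)=1\}$, and let $r_1^\vee,\dots,r_k^\vee$ be the basis of $\langle\Sigma\rangle^\vee$ dual to $r_1,\dots,r_k$. The map $j\mapsto r_j^\vee\bmod\langle\Sigma\rangle$ is a bijection from $J(\Sigma)$ onto the nonzero elements of $\langle\Sigma\rangle^\vee/\langle\Sigma\rangle$. The canonical representative of $\alpha\in\langle\Sigma\rangle^\vee/\langle\Sigma\rangle$ is $0$ if $\alpha=0$, and $r_j^\vee$ for the unique $j\in J(\Sigma)$ with $r_j^\vee\equiv\alpha$ otherwise. *)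

theory Defs
  imports "HOL-Analysis.Analysis"
begin

type_synonym vec = "real^24"

text \<open>The lattice N is realised as a subset of Euclidean space real^24 with the standard
dot product (its positive-definite form); N^- is the same set with the negated form.\<close>

definition negform :: "vec \<Rightarrow> vec \<Rightarrow> real" where
  "negform x y = - (x \<bullet> y)"

definition zspan :: "vec set \<Rightarrow> vec set" where
  "zspan M = {(\<Sum>v\<in>F. of_int (c v) *\<^sub>R v) | F c. finite F \<and> F \<subseteq> M}"

definition qspan :: "vec set \<Rightarrow> vec set" where
  "qspan M = {(\<Sum>v\<in>F. c v *\<^sub>R v) | F c. finite F \<and> F \<subseteq> M \<and> (\<forall>v\<in>F. c v \<in> \<rat>)}"

definition dual_lattice :: "vec set \<Rightarrow> vec set" where
  "dual_lattice M = {x \<in> qspan M. \<forall>v\<in>M. negform x v \<in> \<int>}"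

definition z_indep :: "vec set \<Rightarrow> bool" where
  "z_indep S \<longleftrightarrow> (\<forall>F c. finite F \<and> F \<subseteq> S \<and> (\<Sum>v\<in>F. of_int (c v) *\<^sub>R v) = (0::vec)
                     \<longrightarrow> (\<forall>v\<in>F. c v = (0::int)))"

definition niemeier :: "vec set \<Rightarrow> bool" where
  "niemeier N \<longleftrightarrow> (\<exists>b :: 24 \<Rightarrow> vec.
      N = zspan (range b) \<and> inj b \<and> independent (range b) \<and>
      (\<forall>x\<in>N. \<forall>y\<in>N. x \<bullet> y \<in> \<int>) \<and>
      (\<forall>x\<in>N. \<exists>k::int. x \<bullet> x = 2 * of_int k) \<and>
      (det (\<chi> i j. b i \<bullet> b j) = 1 \<or> det (\<chi> i j. b i \<bullet> b j) = -1))"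

definition has_roots :: "vec set \<Rightarrow> bool" where
  "has_roots N \<longleftrightarrow> (\<exists>x\<in>N. x \<bullet> x = 2)"

definition lroots :: "vec set \<Rightarrow> vec set" where
  "lroots L = {x \<in> L. negform x x = -2}"

definition dual_edge :: "vec \<Rightarrow> vec \<Rightarrow> bool" where
  "dual_edge u v \<longleftrightarrow> u \<noteq> v \<and> negform u v = 1"

definition comps :: "vec set \<Rightarrow> vec set set" where
  "comps Th = (\<lambda>r. {s \<in> Th. (\<lambda>u v. u \<in> Th \<and> v \<in> Th \<and> dual_edge u v)\<^sup>*\<^sup>* r s}) ` Th"

definition adjA :: "nat \<Rightarrow> nat \<Rightarrow> bool" where
  "adjA i j \<longleftrightarrow> j = i + 1 \<or> i = j + 1"

definition adjD :: "nat \<Rightarrow> nat \<Rightarrow> nat \<Rightarrow> bool" where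
  "adjD n i j \<longleftrightarrow> (i < n - 1 \<and> j < n - 1 \<and> adjA i j)
      \<or> (i = n - 3 \<and> j = n - 1) \<or> (i = n - 1 \<and> j = n - 3)"

definition adjE :: "nat \<Rightarrow> nat \<Rightarrow> nat \<Rightarrow> bool" where
  "adjE n i j \<longleftrightarrow> (i < n - 1 \<and> j < n - 1 \<and> adjA i j)
      \<or> (i = 2 \<and> j = n - 1) \<or> (i = n - 1 \<and> j = 2)"

definition is_ADE :: "vec set \<Rightarrow> (vec \<Rightarrow> vec \<Rightarrow> bool) \<Rightarrow> bool" where
  "is_ADE V E \<longleftrightarrow> (\<exists>f n. bij_betw f V {..<n} \<and>
     ((n \<ge> 1 \<and> (\<forall>u\<in>V. \<forall>v\<in>V. E u v \<longleftrightarrow> adjA (f u) (f v))) \<or>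
      (n \<ge> 4 \<and> (\<forall>u\<in>V. \<forall>v\<in>V. E u v \<longleftrightarrow> adjD n (f u) (f v))) \<or>
      (n \<in> {6,7,8} \<and> (\<forall>u\<in>V. \<forall>v\<in>V. E u v \<longleftrightarrow> adjE n (f u) (f v)))))"

definition simple_root_system :: "vec set \<Rightarrow> vec set \<Rightarrow> bool" where
  "simple_root_system R Th \<longleftrightarrow>
     finite Th \<and> Th \<subseteq> R \<and> zspan Th = zspan R \<and> z_indep Th \<and>
     (\<forall>r\<in>Th. \<forall>r'\<in>Th. r \<noteq> r' \<longrightarrow> negform r r' \<in> {0, 1}) \<and>
     (\<forall>C\<in>comps Th. is_ADE C dual_edge)"

definition zcoord :: "vec set \<Rightarrow> vec \<Rightarrow> vec \<Rightarrow> int" where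
  "zcoord S v = (THE c. (\<forall>r. r \<notin> S \<longrightarrow> c r = 0) \<and> v = (\<Sum>r\<in>S. of_int (c r) *\<^sub>R r))"

definition highest_root :: "vec set \<Rightarrow> vec" where
  "highest_root S = (THE \<mu>. \<mu> \<in> lroots (zspan S) \<and>
      (\<forall>\<alpha>\<in>lroots (zspan S). \<forall>r\<in>S. zcoord S \<alpha> r \<le> zcoord S \<mu> r))"

definition Jset :: "vec set \<Rightarrow> vec set" where
  "Jset S = {r \<in> S. zcoord S (highest_root S) r = 1}"

definition dualb :: "vec set \<Rightarrow> vec \<Rightarrow> vec" where
  "dualb S r = (THE w. w \<in> dual_lattice (zspan S) \<and>
      (\<forall>r'\<in>S. negform w r' = (if r' = r then 1 else 0)))"

text \<open>Class of y in <S>^vee / <S> as a coset.\<close>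
definition cls :: "vec set \<Rightarrow> vec \<Rightarrow> vec set" where
  "cls S y = (\<lambda>z. y + z) ` zspan S"

definition canon_rep :: "vec set \<Rightarrow> vec set \<Rightarrow> vec" where
  "canon_rep S \<alpha> = (if \<alpha> = zspan S then 0
      else (THE w. \<exists>r\<in>Jset S. w = dualb S r \<and> w \<in> \<alpha>))"

end

theory Submission
  imports Defs
begin

lemma zspan_alt: "x \<in> zspan M \<longleftrightarrow> (\<exists>F c. finite F \<and> F \<subseteq> M \<and> x = (\<Sum>v\<in>F. of_int (c v) *\<^sub>R v))"
  unfolding zspan_def by auto

lemma zspanE: assumes "x \<in> zspan M"
  obtains F c where "finite F" "F \<subseteq> M" "x = (\<Sum>v\<in>F. of_int (c v) *\<^sub>R v)"
  using assms unfolding zspan_alt by auto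

lemma zspan_0: "0 \<in> zspan M"
  unfolding zspan_alt by (rule exI[of _ "{}"]) auto

lemma zspan_base: "v \<in> M \<Longrightarrow> v \<in> zspan M"
  unfolding zspan_alt by (rule exI[of _ "{v}"], rule exI[of _ "\<lambda>_. 1"]) auto

lemma zspan_add: assumes "x \<in> zspan M" "y \<in> zspan M" shows "x + y \<in> zspan M"
proof -
  obtain F c where F: "finite F" "F \<subseteq> M" "x = (\<Sum>v\<in>F. of_int (c v) *\<^sub>R v)" using assms(1) by (rule zspanE)
  obtain G d where G: "finite G" "G \<subseteq> M" "y = (\<Sum>v\<in>G. of_int (d v) *\<^sub>R v)" using assms(2) by (rule zspanE)
  define e where "e v = (if v \<in> F then c v else 0) + (if v \<in> G then d v else 0)" for v
  have 1: "(\<Sum>v\<in>F\<union>G. of_int (if v \<in> F then c v else 0) *\<^sub>R v) = (\<Sum>v\<in>F. of_int (c v) *\<^sub>R v)"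
    using F G by (intro sum.mono_neutral_cong_right) auto
  have 2: "(\<Sum>v\<in>F\<union>G. of_int (if v \<in> G then d v else 0) *\<^sub>R v) = (\<Sum>v\<in>G. of_int (d v) *\<^sub>R v)"
    using F G by (intro sum.mono_neutral_cong_right) auto
  have "x + y = (\<Sum>v\<in>F\<union>G. of_int (e v) *\<^sub>R v)"
    unfolding e_def of_int_add scaleR_add_left sum.distrib 1 2 F(3) G(3) ..
  then show ?thesis unfolding zspan_alt using F G by (intro exI[of _ "F \<union> G"] exI[of _ e]) simp
qed

lemma zspan_scale: assumes "x \<in> zspan M" shows "of_int k *\<^sub>R x \<in> zspan M"
proof -
  obtain F c where F: "finite F" "F \<subseteq> M" "x = (\<Sum>v\<in>F. of_int (c v) *\<^sub>R v)" using assms(1) by (rule zspanE)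
  have "of_int k *\<^sub>R x = (\<Sum>v\<in>F. of_int (k * c v) *\<^sub>R v)"
    using F by (simp add: scaleR_sum_right)
  then show ?thesis unfolding zspan_alt using F by (intro exI[of _ F] exI[of _ "\<lambda>v. k * c v"]) simp
qed

lemma zspan_neg: "x \<in> zspan M \<Longrightarrow> - x \<in> zspan M"
  using zspan_scale[of x M "-1"] by simp

lemma zspan_diff: "x \<in> zspan M \<Longrightarrow> y \<in> zspan M \<Longrightarrow> x - y \<in> zspan M"
  using zspan_add[of x M "-y"] zspan_neg by simp

lemma zspan_sum: "finite I \<Longrightarrow> (\<And>i. i \<in> I \<Longrightarrow> f i \<in> zspan M) \<Longrightarrow> sum f I \<in> zspan M"
  by (induction I rule: finite_induct) (auto intro: zspan_0 zspan_add)

lemma zspan_subset: assumes "M \<subseteq> zspan X" shows "zspan M \<subseteq> zspan X"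
proof
  fix x assume "x \<in> zspan M"
  then obtain F c where F: "finite F" "F \<subseteq> M" "x = (\<Sum>v\<in>F. of_int (c v) *\<^sub>R v)" by (rule zspanE)
  have "\<And>v. v \<in> F \<Longrightarrow> of_int (c v) *\<^sub>R v \<in> zspan X" using F(2) assms by (intro zspan_scale) (meson subsetD)
  then show "x \<in> zspan X" unfolding F(3) by (intro zspan_sum F(1))
qed

lemma zspan_mono: "M \<subseteq> M' \<Longrightarrow> zspan M \<subseteq> zspan M'"
  by (rule zspan_subset) (auto intro: zspan_base)

lemma mem_cls: "w \<in> cls S y \<longleftrightarrow> w - y \<in> zspan S"
  unfolding cls_def image_iff
proof
  assume "\<exists>z\<in>zspan S. w = y + z" then show "w - y \<in> zspan S" by auto
next
  assume "w - y \<in> zspan S" then show "\<exists>z\<in>zspan S. w = y + z" by (intro bexI[of _ "w - y"]) auto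
qed

lemma cls_eq_zspan: "cls S y = zspan S \<longleftrightarrow> y \<in> zspan S"
proof
  assume "cls S y = zspan S"
  moreover have "y \<in> cls S y" unfolding mem_cls by (simp add: zspan_0)
  ultimately show "y \<in> zspan S" by simp
next
  assume y: "y \<in> zspan S"
  show "cls S y = zspan S"
  proof (intro set_eqI iffI)
    fix w assume "w \<in> cls S y"
    then have "w - y \<in> zspan S" by (simp add: mem_cls)
    from zspan_add[OF this y] show "w \<in> zspan S" by simp
  next
    fix w assume "w \<in> zspan S"
    from zspan_diff[OF this y] show "w \<in> cls S y" by (simp add: mem_cls)
  qed
qed

definition Gm :: "(nat \<Rightarrow> nat \<Rightarrow> bool) \<Rightarrow> nat \<Rightarrow> nat \<Rightarrow> real" where
  "Gm adj i j = (if i = j then 2 else if adj i j then -1 else 0)"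

lemma common_denom:
  fixes q :: "'a \<Rightarrow> real"
  assumes "finite I" "\<forall>i\<in>I. q i \<in> \<rat>"
  shows "\<exists>D::int. D > 0 \<and> (\<forall>i\<in>I. of_int D * q i \<in> \<int>)"
  using assms
proof (induction I rule: finite_induct)
  case empty then show ?case by (intro exI[of _ 1]) simp
next
  case (insert a I)
  then obtain D where D: "D > 0" "\<forall>i\<in>I. of_int D * q i \<in> \<int>" by auto
  from insert have "q a \<in> \<rat>" by simp
  then obtain p s where ps: "q a = of_int p / of_int s" "s > 0"
    by (metis Rats_cases')
  have "\<forall>i\<in>insert a I. of_int (D * s) * q i \<in> \<int>"
  proof
    fix i assume "i \<in> insert a I"
    then show "of_int (D * s) * q i \<in> \<int>"
    proof
      assume "i = a"
      have "of_int s * q a = (of_int p :: real)" using ps by simp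
      then have "of_int (D * s) * q a = (of_int (D * p) :: real)" by (simp add: mult.assoc)
      then show ?thesis using \<open>i = a\<close> Ints_of_int by metis
    next
      assume "i \<in> I"
      then have "of_int D * q i \<in> \<int>" using D by simp
      then have "of_int s * (of_int D * q i) \<in> \<int>" by (rule Ints_mult[OF Ints_of_int])
      then show ?thesis by (simp add: mult_ac)
    qed
  qed
  then show ?case using D ps by (intro exI[of _ "D * s"]) simp
qed

locale cartan =
  fixes b :: "nat \<Rightarrow> vec" and n :: nat and adj :: "nat \<Rightarrow> nat \<Rightarrow> bool"
  assumes inj: "inj_on b {..<n}"
    and gram: "\<And>i j. i < n \<Longrightarrow> j < n \<Longrightarrow> b i \<bullet> b j = Gm adj i j"
    and zind: "z_indep (b ` {..<n})"
begin

definition lc :: "(nat \<Rightarrow> real) \<Rightarrow> vec" where "lc q = (\<Sum>i<n. q i *\<^sub>R b i)"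

lemma lc_inner: "j < n \<Longrightarrow> lc q \<bullet> b j = (\<Sum>i<n. q i * Gm adj i j)"
  unfolding lc_def by (simp add: inner_sum_left gram)

lemma lc_inner_lc: "lc q \<bullet> lc p = (\<Sum>j<n. p j * (lc q \<bullet> b j))"
  unfolding lc_def[of p] by (simp add: inner_sum_right)

lemma lc_add: "lc (\<lambda>i. p i + q i) = lc p + lc q"
  unfolding lc_def by (simp add: scaleR_add_left sum.distrib)

lemma lc_minus: "lc (\<lambda>i. - p i) = - lc p"
  unfolding lc_def by (simp add: sum_negf)

lemma lc_scale: "lc (\<lambda>i. a * p i) = a *\<^sub>R lc p"
  unfolding lc_def by (simp add: scaleR_sum_right)

lemma lc_cong: "(\<And>i. i < n \<Longrightarrow> p i = q i) \<Longrightarrow> lc p = lc q"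
  unfolding lc_def by (rule sum.cong) auto

lemma sum_C: "(\<Sum>v\<in>b ` {..<n}. g v) = (\<Sum>i<n. g (b i))"
  using sum.reindex[OF inj, of g] by simp

lemma inv_b: "i < n \<Longrightarrow> inv_into {..<n} b (b i) = i"
  using inj by (simp add: inv_into_f_f)

lemma zspan_C: "x \<in> zspan (b ` {..<n}) \<longleftrightarrow> (\<exists>c::nat\<Rightarrow>int. x = lc (\<lambda>i. of_int (c i)))"
proof
  assume "x \<in> zspan (b ` {..<n})"
  then obtain F c where F: "finite F" "F \<subseteq> b ` {..<n}" "x = (\<Sum>v\<in>F. of_int (c v) *\<^sub>R v)"
    by (rule zspanE)
  define c' where "c' i = (if b i \<in> F then c (b i) else 0)" for i
  have "(\<Sum>v\<in>F. of_int (c v) *\<^sub>R v) = (\<Sum>v\<in>b ` {..<n}. of_int (if v \<in> F then c v else 0) *\<^sub>R v)"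
    using F by (intro sum.mono_neutral_cong_left) auto
  also have "\<dots> = lc (\<lambda>i. of_int (c' i))"
    unfolding sum_C lc_def c'_def by simp
  finally show "\<exists>c::nat\<Rightarrow>int. x = lc (\<lambda>i. of_int (c i))" using F(3) by (intro exI[of _ c']) simp
next
  assume "\<exists>c::nat\<Rightarrow>int. x = lc (\<lambda>i. of_int (c i))"
  then obtain c :: "nat \<Rightarrow> int" where c: "x = lc (\<lambda>i. of_int (c i))" by auto
  have "x = (\<Sum>v\<in>b ` {..<n}. of_int (c (inv_into {..<n} b v)) *\<^sub>R v)"
    unfolding sum_C c lc_def by (rule sum.cong) (auto simp: inv_b)
  then show "x \<in> zspan (b ` {..<n})" unfolding zspan_alt by (intro exI[of _ "b ` {..<n}"] exI) auto
qed

lemma lc_int_zero: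
  assumes "lc (\<lambda>i. of_int (c i)) = 0" "i < n"
  shows "c i = 0"
proof -
  have "(\<Sum>v\<in>b ` {..<n}. of_int (c (inv_into {..<n} b v)) *\<^sub>R v) = 0"
    unfolding sum_C using assms(1) unfolding lc_def by (simp add: inv_b)
  then have "\<forall>v\<in>b ` {..<n}. c (inv_into {..<n} b v) = 0"
    using zind unfolding z_indep_def by (meson finite_imageI finite_lessThan order_refl)
  then show ?thesis using assms(2) inv_b by force
qed

lemma lc_zero_rat:
  assumes "\<forall>i<n. q i \<in> \<rat>" "lc q = 0" "i < n"
  shows "q i = 0"
proof -
  obtain D :: int where D: "D > 0" "\<forall>i\<in>{..<n}. of_int D * q i \<in> \<int>"
    using common_denom[of "{..<n}" q] assms(1) by auto
  define c where "c i = \<lfloor>of_int D * q i\<rfloor>" for i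
  have ci: "of_int (c i) = of_int D * q i" if "i < n" for i
    using D(2) that unfolding c_def by (metis Ints_cases floor_of_int lessThan_iff)
  have "lc (\<lambda>i. of_int (c i)) = lc (\<lambda>i. of_int D * q i)" by (rule lc_cong) (simp add: ci)
  also have "\<dots> = 0" by (simp add: lc_scale assms(2))
  finally have "c i = 0" using lc_int_zero assms(3) by blast
  then show ?thesis using ci[OF assms(3)] D(1) by simp
qed

end

lemma of_int_floor_Ints: "x \<in> \<int> \<Longrightarrow> of_int \<lfloor>x\<rfloor> = (x::real)"
  by (erule Ints_cases) simp

context cartan begin

lemma lc_diff: "lc (\<lambda>i. p i - q i) = lc p - lc q"
  using lc_add[of p "\<lambda>i. - q i"] lc_minus[of q] by simp

lemma lc_zspan_iff:
  assumes "\<forall>i<n. q i \<in> \<rat>"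
  shows "lc q \<in> zspan (b ` {..<n}) \<longleftrightarrow> (\<forall>i<n. q i \<in> \<int>)"
proof
  assume "lc q \<in> zspan (b ` {..<n})"
  then obtain c :: "nat \<Rightarrow> int" where c: "lc q = lc (\<lambda>i. of_int (c i))" using zspan_C by auto
  have z: "lc (\<lambda>i. q i - of_int (c i)) = 0" using c by (simp add: lc_diff)
  have r: "\<forall>i<n. q i - of_int (c i) \<in> \<rat>" using assms by (intro allI impI Rats_diff Rats_of_int) simp
  have "q i - of_int (c i) = 0" if "i < n" for i by (rule lc_zero_rat[OF r z that])
  then show "\<forall>i<n. q i \<in> \<int>" by (metis Ints_of_int eq_iff_diff_eq_0)
next
  assume a: "\<forall>i<n. q i \<in> \<int>"
  have "lc q = lc (\<lambda>i. of_int \<lfloor>q i\<rfloor>)"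
    using a by (intro lc_cong) (simp add: of_int_floor_Ints)
  then show "lc q \<in> zspan (b ` {..<n})" unfolding zspan_C by (rule exI[of _ "\<lambda>i. \<lfloor>q i\<rfloor>"])
qed

lemma sum_lc: "(\<Sum>v\<in>F. c v *\<^sub>R lc (p v)) = lc (\<lambda>i. \<Sum>v\<in>F. c v * p v i)"
  unfolding lc_def by (simp add: scaleR_sum_right scaleR_sum_left sum.swap[of _ F])

lemma qspan_zspan:
  assumes "x \<in> qspan (zspan (b ` {..<n}))"
  shows "\<exists>q. (\<forall>i<n. q i \<in> \<rat>) \<and> x = lc q"
proof -
  obtain F c where F: "finite F" "F \<subseteq> zspan (b ` {..<n})" "\<forall>v\<in>F. c v \<in> \<rat>"
    "x = (\<Sum>v\<in>F. c v *\<^sub>R v)" using assms unfolding qspan_def by auto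
  have "\<forall>v\<in>F. \<exists>k::nat\<Rightarrow>int. v = lc (\<lambda>i. of_int (k i))" using F(2) zspan_C by auto
  then obtain k where k: "\<forall>v\<in>F. v = lc (\<lambda>i. of_int (k v i))" by metis
  have "x = (\<Sum>v\<in>F. c v *\<^sub>R lc (\<lambda>i. of_int (k v i)))"
    unfolding F(4) by (rule sum.cong) (use k in auto)
  also have "\<dots> = lc (\<lambda>i. \<Sum>v\<in>F. c v * of_int (k v i))" by (rule sum_lc)
  finally show ?thesis using F(3) by (intro exI[of _ "\<lambda>i. \<Sum>v\<in>F. c v * of_int (k v i)"]) 
    (auto intro!: Rats_sum Rats_mult)
qed

lemma b_zspan: "i < n \<Longrightarrow> b i \<in> zspan (b ` {..<n})"
  by (rule zspan_base) auto

lemma dual_char: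
  assumes "y \<in> dual_lattice (zspan (b ` {..<n}))"
  shows "\<exists>q. (\<forall>i<n. q i \<in> \<rat>) \<and> y = lc q \<and> (\<forall>j<n. lc q \<bullet> b j \<in> \<int>)"
proof -
  from assms have y: "y \<in> qspan (zspan (b ` {..<n}))" "\<forall>v\<in>zspan (b ` {..<n}). negform y v \<in> \<int>"
    unfolding dual_lattice_def by auto
  obtain q where q: "\<forall>i<n. q i \<in> \<rat>" "y = lc q" using qspan_zspan[OF y(1)] by auto
  have "lc q \<bullet> b j \<in> \<int>" if "j < n" for j
  proof -
    have "negform y (b j) \<in> \<int>" using y(2) b_zspan[OF that] by auto
    then have "- (lc q \<bullet> b j) \<in> \<int>" using q(2) by (simp add: negform_def)
    then show ?thesis using Ints_minus by fastforce
  qed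
  then show ?thesis using q by auto
qed

lemma lc_inner_int:
  assumes "\<forall>j<n. lc q \<bullet> b j \<in> \<int>"
  shows "lc q \<bullet> lc (\<lambda>i. of_int (c i)) \<in> \<int>"
  unfolding lc_inner_lc using assms by (auto intro!: Ints_sum Ints_mult)

lemma dual_mem:
  assumes "\<forall>i<n. q i \<in> \<rat>" "\<forall>j<n. lc q \<bullet> b j \<in> \<int>"
  shows "lc q \<in> dual_lattice (zspan (b ` {..<n}))"
proof -
  have "lc q = (\<Sum>v\<in>b ` {..<n}. q (inv_into {..<n} b v) *\<^sub>R v)"
    unfolding sum_C lc_def by (rule sum.cong) (auto simp: inv_b)
  moreover have "b ` {..<n} \<subseteq> zspan (b ` {..<n})" using b_zspan by auto
  moreover have "\<forall>v\<in>b ` {..<n}. q (inv_into {..<n} b v) \<in> \<rat>" using assms(1) inv_b by auto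
  ultimately have "lc q \<in> qspan (zspan (b ` {..<n}))"
    unfolding qspan_def by (intro CollectI exI[of _ "b ` {..<n}"] exI[of _ "\<lambda>v. q (inv_into {..<n} b v)"]) auto
  moreover have "negform (lc q) v \<in> \<int>" if v: "v \<in> zspan (b ` {..<n})" for v
  proof -
    obtain c :: "nat \<Rightarrow> int" where "v = lc (\<lambda>i. of_int (c i))" using v zspan_C by auto
    then show ?thesis using lc_inner_int[OF assms(2)] unfolding negform_def by auto
  qed
  ultimately show ?thesis unfolding dual_lattice_def by auto
qed

lemma lc_orth_zero:
  assumes "\<forall>j<n. lc q \<bullet> b j = 0"
  shows "lc q = 0"
proof -
  have "lc q \<bullet> lc q = 0" unfolding lc_inner_lc[of q q] using assms by simp
  then show ?thesis by simp
qed

end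

context cartan begin

lemma bb_eq: "i < n \<Longrightarrow> j < n \<Longrightarrow> (b i = b j) = (i = j)"
  using inj by (auto dest: inj_onD)

lemma zcoord_lc:
  assumes "i < n"
  shows "zcoord (b ` {..<n}) (lc (\<lambda>i. of_int (c i))) (b i) = c i"
proof -
  let ?C = "b ` {..<n}"
  define c0 where "c0 r = (if r \<in> ?C then c (inv_into {..<n} b r) else 0)" for r
  have P0a: "\<forall>r. r \<notin> ?C \<longrightarrow> c0 r = 0" unfolding c0_def by simp
  have P0b: "lc (\<lambda>i. of_int (c i)) = (\<Sum>r\<in>?C. of_int (c0 r) *\<^sub>R r)"
    unfolding c0_def sum_C lc_def by (rule sum.cong) (auto simp: inv_b)
  have U: "c1 = c0" if h: "(\<forall>r. r \<notin> ?C \<longrightarrow> c1 r = 0) \<and> lc (\<lambda>i. of_int (c i)) = (\<Sum>r\<in>?C. of_int (c1 r) *\<^sub>R r)" for c1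
  proof
    fix r show "c1 r = c0 r"
    proof (cases "r \<in> ?C")
      case False then show ?thesis using h P0a by simp
    next
      case True
      have "(\<Sum>r\<in>?C. of_int (c1 r - c0 r) *\<^sub>R r) = (\<Sum>r\<in>?C. of_int (c1 r) *\<^sub>R r) - (\<Sum>r\<in>?C. of_int (c0 r) *\<^sub>R r)"
        by (simp add: scaleR_diff_left sum_subtractf)
      also have "\<dots> = 0" using h P0b by simp
      finally have "\<forall>r\<in>?C. c1 r - c0 r = 0" using zind unfolding z_indep_def by (meson finite_imageI finite_lessThan order_refl)
      then show ?thesis using True by fastforce
    qed
  qed
  have "zcoord ?C (lc (\<lambda>i. of_int (c i))) = c0"
    unfolding zcoord_def
    by (rule the_equality[where P="\<lambda>c1. (\<forall>r. r \<notin> ?C \<longrightarrow> c1 r = 0) \<and> lc (\<lambda>i. of_int (c i)) = (\<Sum>r\<in>?C. of_int (c1 r) *\<^sub>R r)", OF conjI[OF P0a P0b] U])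
  then show ?thesis using assms by (simp add: c0_def inv_b)
qed

lemma dualb_eq:
  assumes r: "r < n" and wq: "\<forall>i<n. w i \<in> \<rat>" and wp: "\<forall>j<n. lc w \<bullet> b j = (if j = r then 1 else 0)"
  shows "dualb (b ` {..<n}) (b r) = - lc w"
proof -
  let ?C = "b ` {..<n}"
  have nw: "- lc w = lc (\<lambda>i. - w i)" by (simp add: lc_minus)
  have wq': "\<forall>i<n. - w i \<in> \<rat>" using wq by simp
  have wp': "\<forall>j<n. lc (\<lambda>i. - w i) \<bullet> b j \<in> \<int>" using wp by (simp add: lc_minus)
  have mem: "- lc w \<in> dual_lattice (zspan ?C)"
    unfolding nw by (rule dual_mem[OF wq' wp'])
  have pr: "\<forall>r'\<in>?C. negform (- lc w) r' = (if r' = b r then 1 else 0)"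
  proof
    fix r' assume "r' \<in> ?C" then obtain j where j: "j < n" "r' = b j" by auto
    show "negform (- lc w) r' = (if r' = b r then 1 else 0)" using wp j r by (simp add: negform_def bb_eq)
  qed
  show ?thesis unfolding dualb_def
  proof (rule the_equality)
    show "- lc w \<in> dual_lattice (zspan ?C) \<and> (\<forall>r'\<in>?C. negform (- lc w) r' = (if r' = b r then 1 else 0))"
      using mem pr by simp
  next
    fix x assume x: "x \<in> dual_lattice (zspan ?C) \<and> (\<forall>r'\<in>?C. negform x r' = (if r' = b r then 1 else 0))"
    obtain q where q: "\<forall>i<n. q i \<in> \<rat>" "x = lc q" using dual_char x by auto
    have "lc (\<lambda>i. q i + w i) = 0"
    proof (rule lc_orth_zero, intro allI impI)
      fix j assume j: "j < n"
      have "negform x (b j) = (if b j = b r then 1 else 0)" using x j by auto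
      then show "lc (\<lambda>i. q i + w i) \<bullet> b j = 0" using wp j r q(2) by (simp add: lc_add inner_add_left negform_def bb_eq)
    qed
    then show "x = - lc w" using q(2) by (simp add: lc_add eq_neg_iff_add_eq_0)
  qed
qed

lemma lroots_C: "\<alpha> \<in> lroots (zspan (b ` {..<n})) \<longleftrightarrow> (\<exists>c. \<alpha> = lc (\<lambda>i. of_int (c i)) \<and> \<alpha> \<bullet> \<alpha> = 2)"
  unfolding lroots_def negform_def zspan_C by auto

lemma highest_root_eq:
  fixes m :: "nat \<Rightarrow> int"
  assumes root: "lc (\<lambda>i. of_int (m i)) \<bullet> lc (\<lambda>i. of_int (m i)) = 2"
    and bound: "\<And>c. lc (\<lambda>i. of_int (c i)) \<bullet> lc (\<lambda>i. of_int (c i)) = 2 \<Longrightarrow> \<forall>i<n. c i \<le> m i"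
  shows "highest_root (b ` {..<n}) = lc (\<lambda>i. of_int (m i))"
proof -
  let ?C = "b ` {..<n}" let ?mu = "lc (\<lambda>i. of_int (m i))"
  have mu: "?mu \<in> lroots (zspan ?C)" using root unfolding lroots_C by auto
  have dom: "\<forall>\<alpha>\<in>lroots (zspan ?C). \<forall>r\<in>?C. zcoord ?C \<alpha> r \<le> zcoord ?C ?mu r"
  proof (intro ballI)
    fix \<alpha> r assume a: "\<alpha> \<in> lroots (zspan ?C)" and r: "r \<in> ?C"
    obtain c where c: "\<alpha> = lc (\<lambda>i. of_int (c i))" "\<alpha> \<bullet> \<alpha> = 2" using a lroots_C by auto
    obtain i where i: "i < n" "r = b i" using r by auto
    have "c i \<le> m i" using bound[OF c(2)[unfolded c(1)]] i(1) by auto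
    then show "zcoord ?C \<alpha> r \<le> zcoord ?C ?mu r" using i c(1) by (simp add: zcoord_lc)
  qed
  show ?thesis unfolding highest_root_def
  proof (rule the_equality)
    show "?mu \<in> lroots (zspan ?C) \<and> (\<forall>\<alpha>\<in>lroots (zspan ?C). \<forall>r\<in>?C. zcoord ?C \<alpha> r \<le> zcoord ?C ?mu r)"
      using mu dom by simp
  next
    fix \<mu> assume h: "\<mu> \<in> lroots (zspan ?C) \<and> (\<forall>\<alpha>\<in>lroots (zspan ?C). \<forall>r\<in>?C. zcoord ?C \<alpha> r \<le> zcoord ?C \<mu> r)"
    obtain c where c: "\<mu> = lc (\<lambda>i. of_int (c i))" "\<mu> \<bullet> \<mu> = 2" using h lroots_C by auto
    have "of_int (c i) = (of_int (m i) :: real)" if i: "i < n" for i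
    proof -
      have "zcoord ?C ?mu (b i) \<le> zcoord ?C \<mu> (b i)" using h mu i by auto
      moreover have "c i \<le> m i" using bound[OF c(2)[unfolded c(1)]] i by auto
      ultimately show ?thesis using i c(1) by (simp add: zcoord_lc)
    qed
    then show "\<mu> = ?mu" unfolding c(1) by (rule lc_cong)
  qed
qed

lemma Jset_eq:
  fixes m :: "nat \<Rightarrow> int"
  assumes root: "lc (\<lambda>i. of_int (m i)) \<bullet> lc (\<lambda>i. of_int (m i)) = 2"
    and bound: "\<And>c. lc (\<lambda>i. of_int (c i)) \<bullet> lc (\<lambda>i. of_int (c i)) = 2 \<Longrightarrow> \<forall>i<n. c i \<le> m i"
  shows "Jset (b ` {..<n}) = b ` {i. i < n \<and> m i = 1}"
proof -
  have h: "highest_root (b ` {..<n}) = lc (\<lambda>i. of_int (m i))" by (rule highest_root_eq[OF root bound])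
  show ?thesis
  proof (intro set_eqI iffI)
    fix r assume "r \<in> Jset (b ` {..<n})"
    then obtain i where i: "i < n" "r = b i" "zcoord (b ` {..<n}) (highest_root (b ` {..<n})) r = 1"
      unfolding Jset_def by auto
    then have "m i = 1" using h by (simp add: zcoord_lc)
    then show "r \<in> b ` {i. i < n \<and> m i = 1}" using i by auto
  next
    fix r assume "r \<in> b ` {i. i < n \<and> m i = 1}"
    then obtain i where i: "i < n" "r = b i" "m i = 1" by auto
    then show "r \<in> Jset (b ` {..<n})" unfolding Jset_def using h by (simp add: zcoord_lc)
  qed
qed

lemma main_unimod:
  assumes U: "\<And>q. \<forall>j<n. lc q \<bullet> b j \<in> \<int> \<Longrightarrow> \<forall>i<n. q i \<in> \<int>"
    and y: "y \<in> dual_lattice (zspan (b ` {..<n}))"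
  shows "canon_rep (b ` {..<n}) (cls (b ` {..<n}) y) - y \<in> zspan (b ` {..<n})"
proof -
  obtain q where q: "\<forall>i<n. q i \<in> \<rat>" "y = lc q" "\<forall>j<n. lc q \<bullet> b j \<in> \<int>" using dual_char[OF y] by auto
  have "y \<in> zspan (b ` {..<n})" using U[OF q(3)] lc_zspan_iff[OF q(1)] q(2) by simp
  then show ?thesis unfolding canon_rep_def cls_eq_zspan by (simp add: zspan_neg)
qed

lemma main_gen:
  fixes m :: "nat \<Rightarrow> int" and w :: "nat \<Rightarrow> nat \<Rightarrow> real"
  assumes root: "lc (\<lambda>i. of_int (m i)) \<bullet> lc (\<lambda>i. of_int (m i)) = 2"
    and bound: "\<And>c. lc (\<lambda>i. of_int (c i)) \<bullet> lc (\<lambda>i. of_int (c i)) = 2 \<Longrightarrow> \<forall>i<n. c i \<le> m i"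
    and wrat: "\<And>r i. r < n \<Longrightarrow> m r = 1 \<Longrightarrow> w r i \<in> \<rat>"
    and wpair: "\<And>r j. r < n \<Longrightarrow> m r = 1 \<Longrightarrow> j < n \<Longrightarrow> lc (w r) \<bullet> b j = (if j = r then 1 else 0)"
    and hcl: "\<And>q. \<forall>j<n. lc q \<bullet> b j \<in> \<int> \<Longrightarrow>
        (\<forall>i<n. q i \<in> \<int>) \<or> (\<exists>!r. r < n \<and> m r = 1 \<and> (\<forall>i<n. q i + w r i \<in> \<int>))"
    and y: "y \<in> dual_lattice (zspan (b ` {..<n}))"
  shows "canon_rep (b ` {..<n}) (cls (b ` {..<n}) y) - y \<in> zspan (b ` {..<n})"
proof -
  let ?C = "b ` {..<n}"
  obtain q where q: "\<forall>i<n. q i \<in> \<rat>" "y = lc q" "\<forall>j<n. lc q \<bullet> b j \<in> \<int>" using dual_char[OF y] by auto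
  show ?thesis
  proof (cases "y \<in> zspan ?C")
    case True
    then show ?thesis unfolding canon_rep_def cls_eq_zspan by (simp add: zspan_neg)
  next
    case False
    then have nz: "\<not> (\<forall>i<n. q i \<in> \<int>)" using lc_zspan_iff[OF q(1)] q(2) by simp
    then have ex: "\<exists>!r. r < n \<and> m r = 1 \<and> (\<forall>i<n. q i + w r i \<in> \<int>)" using hcl[OF q(3)] by (simp only: simp_thms)
    then obtain r where r: "r < n" "m r = 1" "\<forall>i<n. q i + w r i \<in> \<int>" by auto
    have runiq: "r' = r" if "r' < n" "m r' = 1" "\<forall>i<n. q i + w r' i \<in> \<int>" for r'
      using ex r that by auto
    have J: "Jset ?C = b ` {i. i < n \<and> m i = 1}" by (rule Jset_eq[OF root bound])
    have db: "dualb ?C (b r') = - lc (w r')" if "r' < n" "m r' = 1" for r'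
      by (rule dualb_eq) (use that wrat wpair in auto)
    have key: "dualb ?C (b r') \<in> cls ?C y \<longleftrightarrow> (\<forall>i<n. q i + w r' i \<in> \<int>)" if rr: "r' < n" "m r' = 1" for r'
    proof -
      have "dualb ?C (b r') - y = - lc (\<lambda>i. q i + w r' i)" using db[OF rr] q(2) by (simp add: lc_add)
      moreover have "- lc (\<lambda>i. q i + w r' i) \<in> zspan ?C \<longleftrightarrow> lc (\<lambda>i. q i + w r' i) \<in> zspan ?C"
        using zspan_neg by fastforce
      moreover have "\<forall>i<n. q i + w r' i \<in> \<rat>" using q(1) wrat[OF rr] by auto
      ultimately show ?thesis unfolding mem_cls using lc_zspan_iff by simp
    qed
    have ncls: "cls ?C y \<noteq> zspan ?C" using False cls_eq_zspan by simp
    have "canon_rep ?C (cls ?C y) = dualb ?C (b r)"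
      unfolding canon_rep_def using ncls
    proof (simp only: if_False)
      show "(THE w. \<exists>r\<in>Jset ?C. w = dualb ?C r \<and> w \<in> cls ?C y) = dualb ?C (b r)"
      proof (rule the_equality)
        show "\<exists>r'\<in>Jset ?C. dualb ?C (b r) = dualb ?C r' \<and> dualb ?C (b r) \<in> cls ?C y"
          using r key J by auto
      next
        fix x assume "\<exists>r'\<in>Jset ?C. x = dualb ?C r' \<and> x \<in> cls ?C y"
        then obtain r' where r': "r' < n" "m r' = 1" "x = dualb ?C (b r')" "x \<in> cls ?C y" using J by auto
        then have "r' = r" using key runiq by auto
        then show "x = dualb ?C (b r)" using r' by simp
      qed
    qed
    then show ?thesis using key[OF r(1,2)] r(3) by (simp add: mem_cls)
  qed
qed

end

lemma GmA_pt: "q i * Gm adjA i j = (if i = j then 2 * q i else 0)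
   - (if i = j - 1 then (if 0 < j then q i else 0) else 0) - (if i = Suc j then q i else 0)"
  by (auto simp: Gm_def adjA_def)

lemma sumA: assumes "j < n"
  shows "(\<Sum>i<n. q i * Gm adjA i j) = 2 * q j - (if 0 < j then q (j - 1) else 0) - (if Suc j < n then q (Suc j) else 0)"
proof -
  have "(\<Sum>i<n. q i * Gm adjA i j) = (\<Sum>i<n. (if i = j then 2 * q i else 0))
     - (\<Sum>i<n. (if i = j - 1 then (if 0 < j then q i else 0) else 0)) - (\<Sum>i<n. (if i = Suc j then q i else 0))"
    unfolding GmA_pt sum_subtractf ..
  also have "\<dots> = 2 * q j - (if 0 < j then q (j - 1) else 0) - (if Suc j < n then q (Suc j) else 0)"
    using assms by (simp add: sum.delta)
  finally show ?thesis .
qed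

lemma sbp:
  fixes X :: "nat \<Rightarrow> 'a::comm_ring_1"
  assumes "X 0 = 0"
  shows "(\<Sum>j<m. X (Suc j) * (2 * X (Suc j) - X j - X (Suc (Suc j)))) = (\<Sum>j<m. (X (Suc j) - X j)^2) - X m * (X (Suc m) - X m)"
proof (induction m)
  case 0 then show ?case using assms by simp
next
  case (Suc m) then show ?case by (simp add: power2_eq_square algebra_simps)
qed

lemma chain_cong:
  fixes X :: "nat \<Rightarrow> real"
  assumes X0: "X 0 = 0" and H: "\<And>k. 1 \<le> k \<Longrightarrow> k \<le> L \<Longrightarrow> 2 * X k - X (k - 1) - X (Suc k) \<in> \<int>"
  shows "k \<le> Suc L \<Longrightarrow> X k - of_nat k * X 1 \<in> \<int>"
proof -
  have "k \<le> L \<longrightarrow> X k - of_nat k * X 1 \<in> \<int> \<and> X (Suc k) - of_nat (Suc k) * X 1 \<in> \<int>" for k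
  proof (induction k)
    case 0 then show ?case using X0 by simp
  next
    case (Suc k)
    show ?case
    proof
      assume k: "Suc k \<le> L"
      then have ih: "X k - of_nat k * X 1 \<in> \<int>" "X (Suc k) - of_nat (Suc k) * X 1 \<in> \<int>" using Suc by auto
      have z: "2 * X (Suc k) - X k - X (Suc (Suc k)) \<in> \<int>" using H[of "Suc k"] k by simp
      have "X (Suc (Suc k)) - of_nat (Suc (Suc k)) * X 1 =
          2 * (X (Suc k) - of_nat (Suc k) * X 1) - (X k - of_nat k * X 1) - (2 * X (Suc k) - X k - X (Suc (Suc k)))"
        by (simp add: algebra_simps)
      also have "\<dots> \<in> \<int>" by (rule Ints_diff[OF Ints_diff[OF Ints_mult[OF Ints_numeral ih(2)] ih(1)] z])
      finally show "X (Suc k) - of_nat (Suc k) * X 1 \<in> \<int> \<and> X (Suc (Suc k)) - of_nat (Suc (Suc k)) * X 1 \<in> \<int>"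
        using ih by simp
    qed
  qed
  then show "k \<le> Suc L \<Longrightarrow> X k - of_nat k * X 1 \<in> \<int>"
    by (metis Suc_le_mono diff_Suc_1 le_SucE le_refl nat.exhaust)
qed

lemma Ints_small: "(x::real) \<in> \<int> \<Longrightarrow> \<bar>x\<bar> < 1 \<Longrightarrow> x = 0"
  by (erule Ints_cases) simp

definition extA :: "nat \<Rightarrow> (nat \<Rightarrow> 'a::zero) \<Rightarrow> nat \<Rightarrow> 'a" where
  "extA n c k = (if k = 0 \<or> n < k then 0 else c (k - 1))"

lemma abs_le_sq_int: "\<bar>d::int\<bar> \<le> d^2"
proof (cases "d = 0")
  case True then show ?thesis by simp
next
  case False
  then have "1 \<le> \<bar>d\<bar>" by simp
  then have "\<bar>d\<bar> * 1 \<le> \<bar>d\<bar> * \<bar>d\<bar>" by (rule mult_left_mono) simp_all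
  then show ?thesis by (simp add: power2_eq_square abs_mult_self_eq)
qed

lemma abs_sum_le_sq: "\<bar>\<Sum>j\<in>A. (d j::int)\<bar> \<le> (\<Sum>j\<in>A. (d j)^2)"
  by (rule order_trans[OF sum_abs sum_mono]) (rule abs_le_sq_int)

lemma boundA_int:
  fixes Y :: "nat \<Rightarrow> int"
  assumes Y0: "Y 0 = 0" and Yn: "Y (Suc n) = 0" and S: "(\<Sum>j<Suc n. (Y (Suc j) - Y j)^2) = 2"
    and k: "k \<le> n"
  shows "\<bar>Y k\<bar> \<le> 1"
proof -
  have a: "Y k = (\<Sum>j<k. Y (Suc j) - Y j)" using Y0 by (simp add: sum_lessThan_telescope)
  have b: "- Y k = (\<Sum>j=k..<Suc n. Y (Suc j) - Y j)" using Yn k by (simp add: sum_Suc_diff')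
  have "\<bar>Y k\<bar> \<le> (\<Sum>j<k. (Y (Suc j) - Y j)^2)" unfolding a by (rule abs_sum_le_sq)
  moreover have "\<bar>- Y k\<bar> \<le> (\<Sum>j=k..<Suc n. (Y (Suc j) - Y j)^2)" unfolding b by (rule abs_sum_le_sq)
  moreover have "(\<Sum>j<k. (Y (Suc j) - Y j)^2) + (\<Sum>j=k..<Suc n. (Y (Suc j) - Y j)^2) = 2"
    using k S sum.atLeastLessThan_concat[of 0 k "Suc n" "\<lambda>j. (Y (Suc j) - Y j)^2"] by (simp add: atLeast0LessThan)
  ultimately show ?thesis by simp
qed

definition wA :: "nat \<Rightarrow> nat \<Rightarrow> nat \<Rightarrow> real" where
  "wA n r i = real (min (Suc i) (Suc r)) - real (Suc i) * real (Suc r) / real (Suc n)"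

context cartan begin

lemma innerA: "adj = adjA \<Longrightarrow> j < n \<Longrightarrow>
   lc q \<bullet> b j = 2 * q j - (if 0 < j then q (j - 1) else 0) - (if Suc j < n then q (Suc j) else 0)"
  by (simp add: lc_inner sumA)

lemma quadA:
  assumes "adj = adjA"
  shows "lc c \<bullet> lc c = (\<Sum>j<Suc n. (extA n c (Suc j) - extA n c j)^2)"
proof -
  let ?X = "extA n c"
  have X0: "?X 0 = 0" by (simp add: extA_def)
  have Xn: "?X (Suc n) = 0" by (simp add: extA_def)
  have "lc c \<bullet> lc c = (\<Sum>j<n. c j * (lc c \<bullet> b j))" by (rule lc_inner_lc)
  also have "\<dots> = (\<Sum>j<n. ?X (Suc j) * (2 * ?X (Suc j) - ?X j - ?X (Suc (Suc j))))"
    by (rule sum.cong) (auto simp: innerA[OF assms] extA_def)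
  also have "\<dots> = (\<Sum>j<n. (?X (Suc j) - ?X j)^2) - ?X n * (?X (Suc n) - ?X n)"
    by (rule sbp[where X="extA n c", OF X0])
  also have "\<dots> = (\<Sum>j<Suc n. (?X (Suc j) - ?X j)^2)"
    using Xn by (simp add: power2_eq_square)
  finally show ?thesis .
qed

lemma rootA:
  assumes "adj = adjA" "n \<ge> 1"
  shows "lc (\<lambda>i. of_int 1) \<bullet> lc (\<lambda>i. of_int 1) = 2"
proof -
  obtain n' where n': "n = Suc n'" using assms(2) by (cases n) auto
  let ?X = "extA n (\<lambda>i. of_int 1 :: real)"
  have "lc (\<lambda>i. of_int 1) \<bullet> lc (\<lambda>i. of_int 1) = (\<Sum>j<Suc n. (?X (Suc j) - ?X j)^2)"
    by (rule quadA[OF assms(1)])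
  also have "\<dots> = (\<Sum>j<Suc n. (if j = 0 then 1 else 0) + (if j = n then 1 else 0))"
    using assms(2) by (intro sum.cong) (auto simp: extA_def)
  also have "\<dots> = 2" using assms(2) by (simp add: sum.distrib)
  finally show ?thesis .
qed

lemma boundA:
  assumes "adj = adjA" "lc (\<lambda>i. of_int (c i)) \<bullet> lc (\<lambda>i. of_int (c i)) = 2"
  shows "\<forall>i<n. c i \<le> 1"
proof (intro allI impI)
  fix i assume i: "i < n"
  let ?Y = "extA n c"
  have X: "extA n (\<lambda>i. of_int (c i) :: real) k = of_int (?Y k)" for k by (simp add: extA_def)
  have "of_int (\<Sum>j<Suc n. (?Y (Suc j) - ?Y j)^2) = (2::real)"
    using quadA[OF assms(1), of "\<lambda>i. of_int (c i)"] assms(2) unfolding X by simp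
  then have S: "(\<Sum>j<Suc n. (?Y (Suc j) - ?Y j)^2) = 2" by linarith
  have "\<bar>?Y (Suc i)\<bar> \<le> 1" by (rule boundA_int[OF _ _ S]) (use i in \<open>auto simp: extA_def\<close>)
  then show "c i \<le> 1" using i by (simp add: extA_def)
qed

lemma wpairA:
  assumes "adj = adjA" "r < n" "j < n"
  shows "lc (wA n r) \<bullet> b j = (if j = r then 1 else 0)"
proof -
  define \<rho> where "\<rho> = real (Suc r) / real (Suc n)"
  define h where "h k = real (min k (Suc r)) - real k * \<rho>" for k
  have wh: "wA n r i = h (Suc i)" for i unfolding wA_def h_def \<rho>_def by simp
  have h0: "h 0 = 0" unfolding h_def by simp
  have hn: "h (Suc n) = 0" unfolding h_def \<rho>_def using assms(2) by simp
  have e1: "(if 0 < j then wA n r (j - 1) else 0) = h j" using h0 by (cases j) (auto simp: wh)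
  have e2: "(if Suc j < n then wA n r (Suc j) else 0) = h (Suc (Suc j))"
    using hn assms(3) by (auto simp: wh) (metis Suc_lessI)
  have lin: "2 * h (Suc j) - h j - h (Suc (Suc j)) =
     real (2 * min (Suc j) (Suc r)) - real (min j (Suc r)) - real (min (Suc (Suc j)) (Suc r))"
    unfolding h_def by (simp add: algebra_simps)
  have nat: "real (2 * min (Suc j) (Suc r)) - real (min j (Suc r)) - real (min (Suc (Suc j)) (Suc r)) = (if j = r then 1 else 0)"
  proof (cases "j < r")
    case True then show ?thesis by (simp add: min_def)
  next
    case False then show ?thesis by (cases "j = r") (simp_all add: min_def)
  qed
  have "lc (wA n r) \<bullet> b j = 2 * wA n r j - h j - h (Suc (Suc j))" unfolding innerA[OF assms(1,3)] e1 e2 ..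
  also have "\<dots> = 2 * h (Suc j) - h j - h (Suc (Suc j))" by (simp add: wh)
  finally show ?thesis unfolding lin nat .
qed

end

lemma classA:
  fixes q :: "nat \<Rightarrow> real"
  assumes n: "n \<ge> 1"
    and H: "\<forall>j<n. 2 * q j - (if 0 < j then q (j - 1) else 0) - (if Suc j < n then q (Suc j) else 0) \<in> \<int>"
  shows "(\<forall>i<n. q i \<in> \<int>) \<or> (\<exists>!r. r < n \<and> (\<forall>i<n. q i + wA n r i \<in> \<int>))"
proof -
  let ?X = "extA n q"
  have H': "2 * ?X k - ?X (k - 1) - ?X (Suc k) \<in> \<int>" if k: "1 \<le> k" "k \<le> n" for k
  proof -
    have eq: "2 * ?X k - ?X (k - 1) - ?X (Suc k) =
        2 * q (k-1) - (if 0 < k-1 then q (k-1-1) else 0) - (if Suc (k-1) < n then q (Suc (k-1)) else 0)"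
      using k by (auto simp: extA_def)
    have "k - 1 < n" using k by simp
    then have m: "2 * q (k-1) - (if 0 < k-1 then q (k-1-1) else 0) - (if Suc (k-1) < n then q (Suc (k-1)) else 0) \<in> \<int>"
      by (rule H[rule_format])
    show ?thesis unfolding eq by (rule m)
  qed
  have C: "?X k - of_nat k * ?X 1 \<in> \<int>" if "k \<le> Suc n" for k
    by (rule chain_cong[where X="?X" and L=n, OF _ H' that]) (simp_all add: extA_def)
  have X1: "?X 1 = q 0" using n by (simp add: extA_def)
  have qi: "q i - of_nat (Suc i) * q 0 \<in> \<int>" if "i < n" for i
    using C[of "Suc i"] that X1 by (simp add: extA_def)
  have "- (of_nat (Suc n) * q 0) \<in> \<int>" using C[of "Suc n"] X1 by (simp add: extA_def)
  then have "of_nat (Suc n) * q 0 \<in> \<int>" using Ints_minus by fastforce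
  then obtain t :: int where t: "of_nat (Suc n) * q 0 = of_int t" by (auto elim: Ints_cases)
  have q0: "q 0 = of_int t / of_nat (Suc n)" using t by (simp add: field_simps)
  show ?thesis
  proof (cases "int (Suc n) dvd t")
    case True
    then obtain s where s: "t = int (Suc n) * s" by (auto elim: dvdE)
    have q0s: "q 0 = of_int s" using q0 s by simp
    have "q i \<in> \<int>" if i: "i < n" for i
    proof -
      have "q i = (q i - of_nat (Suc i) * q 0) + of_int (int (Suc i) * s)" using q0s by simp
      also have "\<dots> \<in> \<int>" by (rule Ints_add[OF qi[OF i] Ints_of_int])
      finally show ?thesis .
    qed
    then show ?thesis by simp
  next
    case False
    define K where "K = t div int (Suc n)"
    define s where "s = t mod int (Suc n)"
    have s0: "0 \<le> s" "s < int (Suc n)" unfolding s_def by simp_all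
    have "s \<noteq> 0" using False unfolding s_def by (simp add: dvd_eq_mod_eq_0)
    then have s1: "1 \<le> s" using s0 by simp
    define r where "r = nat s - 1"
    have r: "r < n" "int (Suc r) = s" using s0 s1 unfolding r_def by auto
    have ts: "of_int t = real (Suc n) * of_int K + real (Suc r)"
    proof -
      have "t = int (Suc n) * K + s" unfolding K_def s_def by simp
      then have "of_int t = (of_int (int (Suc n) * K + int (Suc r)) :: real)" using r(2) by simp
      then show ?thesis by simp
    qed
    have ex: "\<forall>i<n. q i + wA n r i \<in> \<int>"
    proof (intro allI impI)
      fix i assume i: "i < n"
      have "q i + wA n r i = (q i - of_nat (Suc i) * q 0) + of_int (int (min (Suc i) (Suc r)) + int (Suc i) * K)"
        unfolding wA_def q0 ts by (simp add: field_simps)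
      also have "\<dots> \<in> \<int>" by (rule Ints_add[OF qi[OF i] Ints_of_int])
      finally show "q i + wA n r i \<in> \<int>" .
    qed
    have uniq: "r1 = r2" if r1: "r1 < n" "\<forall>i<n. q i + wA n r1 i \<in> \<int>"
      and r2: "r2 < n" "\<forall>i<n. q i + wA n r2 i \<in> \<int>" for r1 r2
    proof -
      have i: "(q 0 + wA n r1 0) - (q 0 + wA n r2 0) \<in> \<int>" using r1 r2 n by (intro Ints_diff) auto
      have d: "(q 0 + wA n r1 0) - (q 0 + wA n r2 0) = (real r2 - real r1) / real (Suc n)"
        unfolding wA_def by (simp add: add_divide_distrib diff_divide_distrib)
      have a: "\<bar>(real r2 - real r1) / real (Suc n)\<bar> < 1"
        using r1 r2 by (simp add: abs_divide divide_less_eq abs_less_iff)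
      from i have "(real r2 - real r1) / real (Suc n) \<in> \<int>" unfolding d .
      from Ints_small[OF this a] show ?thesis by simp
    qed
    show ?thesis using ex r(1) uniq by blast
  qed
qed

context cartan begin

lemma typeA:
  assumes "adj = adjA" "n \<ge> 1" "y \<in> dual_lattice (zspan (b ` {..<n}))"
  shows "canon_rep (b ` {..<n}) (cls (b ` {..<n}) y) - y \<in> zspan (b ` {..<n})"
proof (rule main_gen[where m="\<lambda>_. 1" and w="wA n"])
  show "lc (\<lambda>i. of_int 1) \<bullet> lc (\<lambda>i. of_int 1) = 2" by (rule rootA[OF assms(1,2)])
  show "\<forall>i<n. c i \<le> 1" if "lc (\<lambda>i. of_int (c i)) \<bullet> lc (\<lambda>i. of_int (c i)) = 2" for c
    by (rule boundA[OF assms(1) that])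
  show "wA n r i \<in> \<rat>" for r i by (simp add: wA_def)
  show "lc (wA n r) \<bullet> b j = (if j = r then 1 else 0)" if "r < n" "j < n" for r j
    by (rule wpairA[OF assms(1) that])
  show "(\<forall>i<n. q i \<in> \<int>) \<or> (\<exists>!r. r < n \<and> (1::int) = 1 \<and> (\<forall>i<n. q i + wA n r i \<in> \<int>))"
    if "\<forall>j<n. lc q \<bullet> b j \<in> \<int>" for q
    using classA[OF assms(2), of q] that by (simp add: innerA[OF assms(1)])
  show "y \<in> dual_lattice (zspan (b ` {..<n}))" by (rule assms(3))
qed

end

lemma GmD_pt0:
  assumes "n = Suc (Suc (Suc p))"
  shows "q i * Gm (adjD n) i j = (if i = j then 2 * q i else 0)
   - (if Suc i = j \<and> j < Suc (Suc p) then q i else 0)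
   - (if i = Suc j \<and> i < Suc (Suc p) then q i else 0)
   - (if i = Suc (Suc p) \<and> j = p then q i else 0)
   - (if i = p \<and> j = Suc (Suc p) then q i else 0)"
proof -
  have "adjD n i j \<longleftrightarrow> (Suc i = j \<and> j < Suc (Suc p)) \<or> (i = Suc j \<and> i < Suc (Suc p))
     \<or> (i = Suc (Suc p) \<and> j = p) \<or> (i = p \<and> j = Suc (Suc p))"
    unfolding adjD_def adjA_def assms by auto
  then show ?thesis unfolding Gm_def by auto
qed

lemma if_conv1: "(if Suc i = j \<and> j < S then (x::real) else 0) = (if i = j - 1 then (if 0 < j \<and> j < S then x else 0) else 0)"
  by auto
lemma if_conv2: "(if i = Suc j \<and> i < S then (x::real) else 0) = (if i = Suc j then (if Suc j < S then x else 0) else 0)"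
  by auto
lemma if_conv3: "(if i = a \<and> j = c then (x::real) else 0) = (if i = a then (if j = c then x else 0) else 0)"
  by auto

lemma GmD_pt:
  assumes "n = Suc (Suc (Suc p))"
  shows "q i * Gm (adjD n) i j = (if i = j then 2 * q i else 0)
   - (if i = j - 1 then (if 0 < j \<and> j < Suc (Suc p) then q i else 0) else 0)
   - (if i = Suc j then (if Suc j < Suc (Suc p) then q i else 0) else 0)
   - (if i = Suc (Suc p) then (if j = p then q i else 0) else 0)
   - (if i = p then (if j = Suc (Suc p) then q i else 0) else 0)"
  unfolding GmD_pt0[OF assms] if_conv1 if_conv2 if_conv3 ..

lemma sumD:
  assumes "n = Suc (Suc (Suc p))" "j < n"
  shows "(\<Sum>i<n. q i * Gm (adjD n) i j) = 2 * q j - (if 0 < j \<and> j < Suc (Suc p) then q (j - 1) else 0)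
    - (if Suc j < Suc (Suc p) then q (Suc j) else 0) - (if j = p then q (Suc (Suc p)) else 0)
    - (if j = Suc (Suc p) then q p else 0)"
proof -
  have "(\<Sum>i<n. q i * Gm (adjD n) i j) = (\<Sum>i<n. (if i = j then 2 * q i else 0))
     - (\<Sum>i<n. (if i = j - 1 then (if 0 < j \<and> j < Suc (Suc p) then q i else 0) else 0))
     - (\<Sum>i<n. (if i = Suc j then (if Suc j < Suc (Suc p) then q i else 0) else 0))
     - (\<Sum>i<n. (if i = Suc (Suc p) then (if j = p then q i else 0) else 0))
     - (\<Sum>i<n. (if i = p then (if j = Suc (Suc p) then q i else 0) else 0))"
    unfolding GmD_pt[OF assms(1)] sum_subtractf ..
  also have "\<dots> = 2 * q j - (if 0 < j \<and> j < Suc (Suc p) then q (j - 1) else 0)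
    - (if Suc j < Suc (Suc p) then q (Suc j) else 0) - (if j = p then q (Suc (Suc p)) else 0)
    - (if j = Suc (Suc p) then q p else 0)"
  proof -
    have a: "j - 1 < n" "Suc (Suc p) < n" "p < n" "j < n" using assms by auto
    have b: "(if Suc j < n then (if Suc j < Suc (Suc p) then q (Suc j) else 0) else 0) = (if Suc j < Suc (Suc p) then q (Suc j) else (0::real))"
      using assms by auto
    show ?thesis by (simp only: sum.delta finite_lessThan lessThan_iff a if_True b)
  qed
  finally show ?thesis .
qed
definition mD :: "nat \<Rightarrow> nat \<Rightarrow> int" where
  "mD n r = (if r = 0 \<or> r = n - 2 \<or> r = n - 1 then 1 else 2)"

context cartan begin

lemma innerD: assumes "adj = adjD n" "n = Suc (Suc (Suc p))" "j < n" shows "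
   lc q \<bullet> b j = 2 * q j - (if 0 < j \<and> j < Suc (Suc p) then q (j - 1) else 0)
    - (if Suc j < Suc (Suc p) then q (Suc j) else 0) - (if j = p then q (Suc (Suc p)) else 0)
    - (if j = Suc (Suc p) then q p else 0)"
proof -
  have "lc q \<bullet> b j = (\<Sum>i<n. q i * Gm adj i j)" by (rule lc_inner[OF assms(3)])
  also have "\<dots> = 2 * q j - (if 0 < j \<and> j < Suc (Suc p) then q (j - 1) else 0)
    - (if Suc j < Suc (Suc p) then q (Suc j) else 0) - (if j = p then q (Suc (Suc p)) else 0)
    - (if j = Suc (Suc p) then q p else 0)" unfolding assms(1) by (rule sumD[OF assms(2,3)])
  finally show ?thesis .
qed

lemma quadD:
  assumes "adj = adjD n" "n = Suc (Suc (Suc p))" "p \<ge> 1"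
  shows "lc c \<bullet> lc c = (\<Sum>j<Suc p. (extA n c (Suc j) - extA n c j)^2)
     + (c (Suc p) + c (Suc (Suc p)) - c p)^2 + (c (Suc (Suc p)) - c (Suc p))^2"
proof -
  let ?X = "extA n c"
  have X0: "?X 0 = 0" by (simp add: extA_def)
  have "lc c \<bullet> lc c = (\<Sum>j<n. c j * (lc c \<bullet> b j))" by (rule lc_inner_lc)
  also have "\<dots> = (\<Sum>j<Suc p. c j * (lc c \<bullet> b j)) + c (Suc p) * (lc c \<bullet> b (Suc p))
      + c (Suc (Suc p)) * (lc c \<bullet> b (Suc (Suc p)))"
    using assms(2) by simp
  also have "(\<Sum>j<Suc p. c j * (lc c \<bullet> b j)) =
      (\<Sum>j<Suc p. ?X (Suc j) * (2 * ?X (Suc j) - ?X j - ?X (Suc (Suc j)))) - c p * c (Suc (Suc p))"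
  proof -
    have "(\<Sum>j<Suc p. c j * (lc c \<bullet> b j)) =
       (\<Sum>j<Suc p. ?X (Suc j) * (2 * ?X (Suc j) - ?X j - ?X (Suc (Suc j))) - (if j = p then c p * c (Suc (Suc p)) else 0))"
    proof (rule sum.cong)
      fix j assume "j \<in> {..<Suc p}"
      then have j: "j < Suc p" by simp
      have e1: "?X (Suc j) = c j" using j assms(2) by (simp add: extA_def)
      have e2: "?X j = (if 0 < j \<and> j < Suc (Suc p) then c (j - 1) else 0)" using j assms(2) by (simp add: extA_def)
      have e3: "?X (Suc (Suc j)) = (if Suc j < Suc (Suc p) then c (Suc j) else 0)" using j assms(2) by (simp add: extA_def)
      have jn: "j < n" using j assms(2) by simp
        show "c j * (lc c \<bullet> b j) = ?X (Suc j) * (2 * ?X (Suc j) - ?X j - ?X (Suc (Suc j))) - (if j = p then c p * c (Suc (Suc p)) else 0)"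
        unfolding innerD[OF assms(1,2) jn] e1 e2 e3 using j by (simp add: algebra_simps)
    qed simp
    then show ?thesis by (simp add: sum_subtractf sum.delta)
  qed
  also have "(\<Sum>j<Suc p. ?X (Suc j) * (2 * ?X (Suc j) - ?X j - ?X (Suc (Suc j)))) =
     (\<Sum>j<Suc p. (?X (Suc j) - ?X j)^2) - ?X (Suc p) * (?X (Suc (Suc p)) - ?X (Suc p))"
    by (rule sbp[where X="?X", OF X0])
  also have "lc c \<bullet> b (Suc p) = 2 * c (Suc p) - c p"
    using innerD[OF assms(1,2), of "Suc p" c] assms(2) by simp
  also have "lc c \<bullet> b (Suc (Suc p)) = 2 * c (Suc (Suc p)) - c p"
    using innerD[OF assms(1,2), of "Suc (Suc p)" c] assms(2) by simp
  also have "?X (Suc p) = c p" by (simp add: extA_def assms(2))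
  also have "?X (Suc (Suc p)) = c (Suc p)" by (simp add: extA_def assms(2))
  finally show ?thesis by (simp add: power2_eq_square algebra_simps)
qed

end

lemma sum_prefix_le:
  fixes f :: "nat \<Rightarrow> int"
  assumes "k \<le> m" "\<And>j. 0 \<le> f j"
  shows "(\<Sum>j<k. f j) \<le> (\<Sum>j<m. f j)"
  by (rule sum_mono2) (use assms in auto)

context cartan begin

lemma rootD:
  assumes "adj = adjD n" "n = Suc (Suc (Suc p))" "p \<ge> 1"
  shows "lc (\<lambda>i. of_int (mD n i)) \<bullet> lc (\<lambda>i. of_int (mD n i)) = 2"
proof -
  let ?c = "\<lambda>i. of_int (mD n i) :: real"
  have m: "mD n p = 2" "mD n (Suc p) = 1" "mD n (Suc (Suc p)) = 1" using assms by (auto simp: mD_def)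
  have "(\<Sum>j<Suc p. (extA n ?c (Suc j) - extA n ?c j)^2) = (\<Sum>j<Suc p. (if j = 0 then 1 else 0) + (if j = 1 then 1 else 0))"
  proof (rule sum.cong)
    fix j assume "j \<in> {..<Suc p}"
    then have j: "j < Suc p" by simp
    show "(extA n ?c (Suc j) - extA n ?c j)^2 = (if j = 0 then 1 else 0) + (if j = 1 then 1 else 0)"
      using j assms(2,3) by (auto simp: extA_def mD_def)
  qed simp
  also have "\<dots> = 2" using assms(3) by (simp add: sum.distrib)
  finally show ?thesis unfolding quadD[OF assms] using m by simp
qed

lemma boundD:
  assumes "adj = adjD n" "n = Suc (Suc (Suc p))" "p \<ge> 1"
    and c: "lc (\<lambda>i. of_int (c i)) \<bullet> lc (\<lambda>i. of_int (c i)) = 2"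
  shows "\<forall>i<n. c i \<le> mD n i"
proof -
  let ?Y = "extA n c"
  let ?S = "\<Sum>j<Suc p. (?Y (Suc j) - ?Y j)^2"
  let ?x = "c (Suc p) + c (Suc (Suc p)) - c p" and ?y = "c (Suc (Suc p)) - c (Suc p)"
  have X: "extA n (\<lambda>i. of_int (c i) :: real) k = of_int (?Y k)" for k by (simp add: extA_def)
  have "of_int (?S + ?x^2 + ?y^2) = (2::real)"
    using quadD[OF assms(1-3), of "\<lambda>i. of_int (c i)"] c unfolding X by simp
  then have S: "?S + ?x^2 + ?y^2 = 2" by linarith
  have Snn: "0 \<le> ?S" by (rule sum_nonneg) simp
  have pre: "\<bar>c i\<bar> \<le> ?S" if i: "i \<le> p" for i
  proof -
    have "(\<Sum>j<Suc i. ?Y (Suc j) - ?Y j) = ?Y (Suc i) - ?Y 0" by (rule sum_lessThan_telescope)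
    also have "\<dots> = c i" using i assms(2) by (simp add: extA_def)
    finally have "c i = (\<Sum>j<Suc i. ?Y (Suc j) - ?Y j)" by simp
    then have "\<bar>c i\<bar> \<le> (\<Sum>j<Suc i. (?Y (Suc j) - ?Y j)^2)" using abs_sum_le_sq[of "\<lambda>j. ?Y (Suc j) - ?Y j" "{..<Suc i}"] by (simp only:)
    also have "\<dots> \<le> ?S" by (rule sum_prefix_le) (use i in auto)
    finally show ?thesis .
  qed
  have c0: "c 0 \<le> 1"
  proof -
    have A: "(?Y 1 - ?Y 0)^2 \<le> ?S" using sum_prefix_le[of 1 "Suc p" "\<lambda>j. (?Y (Suc j) - ?Y j)^2"] by simp
    have B: "?Y 1 - ?Y 0 = c 0" using assms(2) by (simp add: extA_def)
    have x2: "0 \<le> ?x^2" and y2: "0 \<le> ?y^2" by simp_all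
    from A B have "(c 0)^2 \<le> ?S" by simp
    then have "(c 0)^2 \<le> 2" using S x2 y2 by linarith
    show ?thesis
    proof (rule ccontr)
      assume "\<not> c 0 \<le> 1"
      then have "2 \<le> c 0" by simp
      then have "2 * 2 \<le> c 0 * c 0" using mult_mono[of 2 "c 0" 2 "c 0"] by simp
      then show False using \<open>(c 0)^2 \<le> 2\<close> by (simp add: power2_eq_square)
    qed
  qed
  have xa: "\<bar>?x\<bar> \<le> ?x^2" "\<bar>?y\<bar> \<le> ?y^2" by (rule abs_le_sq_int)+
  have cp: "\<bar>c p\<bar> \<le> ?S" by (rule pre) simp
  have c1: "c (Suc p) \<le> 1" using S xa cp by linarith
  have c2: "c (Suc (Suc p)) \<le> 1" using S xa cp by linarith
  show ?thesis
  proof (intro allI impI)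
    fix i assume i: "i < n"
    show "c i \<le> mD n i"
    proof (cases "i = 0")
      case True then show ?thesis using c0 by (simp add: mD_def)
    next
      case False
      show ?thesis
      proof (cases "i \<le> p")
        case True
        then have "mD n i = 2" using False assms(2) by (auto simp: mD_def)
        then show ?thesis using pre[OF True] S xa by simp
      next
        case False
        then have "i = Suc p \<or> i = Suc (Suc p)" using i assms(2) by auto
        then show ?thesis using c1 c2 assms(2) by (auto simp: mD_def)
      qed
    qed
  qed
qed

end

definition wD :: "nat \<Rightarrow> nat \<Rightarrow> nat \<Rightarrow> real" where
  "wD n r i = (if r = 0 then (if i < n - 2 then 1 else 1/2)
     else if r = n - 2 then (if i < n - 2 then real (Suc i) / 2 else if i = n - 2 then real n / 4 else real (n - 2) / 4)
     else (if i < n - 2 then real (Suc i) / 2 else if i = n - 2 then real (n - 2) / 4 else real n / 4))"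

context cartan begin

lemma wpairD:
  assumes "adj = adjD n" "n = Suc (Suc (Suc p))" "p \<ge> 1" "r = 0 \<or> r = Suc p \<or> r = Suc (Suc p)" "j < n"
  shows "lc (wD n r) \<bullet> b j = (if j = r then 1 else 0)"
proof -
  have w0: "wD n 0 i = (if i \<le> p then 1 else 1/2)" for i using assms(2) by (simp add: wD_def)
  have w1: "wD n (Suc p) i = (if i \<le> p then real (Suc i) / 2 else if i = Suc p then (real p + 3) / 4 else (real p + 1) / 4)" for i
    using assms(2) by (auto simp: wD_def)
  have w2: "wD n (Suc (Suc p)) i = (if i \<le> p then real (Suc i) / 2 else if i = Suc p then (real p + 1) / 4 else (real p + 3) / 4)" for i
    using assms(2) by (auto simp: wD_def)
  have I: "lc (wD n r) \<bullet> b j = 2 * wD n r j - (if 0 < j \<and> j < Suc (Suc p) then wD n r (j - 1) else 0)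
    - (if Suc j < Suc (Suc p) then wD n r (Suc j) else 0) - (if j = p then wD n r (Suc (Suc p)) else 0)
    - (if j = Suc (Suc p) then wD n r p else 0)" by (rule innerD[OF assms(1,2,5)])
  consider "j < p" | "j = p" | "j = Suc p" | "j = Suc (Suc p)" using assms(2,5) by linarith
  then show ?thesis
  proof cases
    case 1
    then show ?thesis unfolding I using assms(3,4)
      by (cases "j = 0") (auto simp: w0 w1 w2 field_simps)
  next
    case 2
    then show ?thesis unfolding I using assms(3,4)
      by (auto simp: w0 w1 w2 field_simps)
  next
    case 3
    then show ?thesis unfolding I using assms(3,4)
      by (auto simp: w0 w1 w2 field_simps)
  next
    case 4
    then show ?thesis unfolding I using assms(3,4)
      by (auto simp: w0 w1 w2 field_simps)
  qed
qed

end

lemma presD0: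
  fixes A B U V W zp k1 k2 k3 zp1 P :: int
  assumes "A = 2*W + 2*zp + 2*k1" "B = 2*W + 2*zp + 2*k2" "U = 2*V" "U = 2*k3 + k1 + k2 - 2*zp + 2*zp1"
  shows "(2 dvd U \<and> 4 dvd A \<and> 4 dvd B) \<or>
    ((2 dvd U + 2 \<and> 4 dvd A + 2 \<and> 4 dvd B + 2) \<and> \<not> (2 dvd U + 1 \<and> 4 dvd A + P + 3 \<and> 4 dvd B + P + 1) \<and> \<not> (2 dvd U + 1 \<and> 4 dvd A + P + 1 \<and> 4 dvd B + P + 3)) \<or>
    (\<not> (2 dvd U + 2 \<and> 4 dvd A + 2 \<and> 4 dvd B + 2) \<and> (2 dvd U + 1 \<and> 4 dvd A + P + 3 \<and> 4 dvd B + P + 1) \<and> \<not> (2 dvd U + 1 \<and> 4 dvd A + P + 1 \<and> 4 dvd B + P + 3)) \<or>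
    (\<not> (2 dvd U + 2 \<and> 4 dvd A + 2 \<and> 4 dvd B + 2) \<and> \<not> (2 dvd U + 1 \<and> 4 dvd A + P + 3 \<and> 4 dvd B + P + 1) \<and> (2 dvd U + 1 \<and> 4 dvd A + P + 1 \<and> 4 dvd B + P + 3))"
  using assms by presburger

lemma presD1:
  fixes A B U V W zp k1 k2 k3 zp1 P :: int
  assumes "A = 2*W + P + 1 + 2*zp + 2*k1" "B = 2*W + P + 1 + 2*zp + 2*k2" "U = 2*V + 1" "U = 2*k3 + k1 + k2 - 2*zp + 2*zp1"
  shows "(2 dvd U \<and> 4 dvd A \<and> 4 dvd B) \<or>
    ((2 dvd U + 2 \<and> 4 dvd A + 2 \<and> 4 dvd B + 2) \<and> \<not> (2 dvd U + 1 \<and> 4 dvd A + P + 3 \<and> 4 dvd B + P + 1) \<and> \<not> (2 dvd U + 1 \<and> 4 dvd A + P + 1 \<and> 4 dvd B + P + 3)) \<or>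
    (\<not> (2 dvd U + 2 \<and> 4 dvd A + 2 \<and> 4 dvd B + 2) \<and> (2 dvd U + 1 \<and> 4 dvd A + P + 3 \<and> 4 dvd B + P + 1) \<and> \<not> (2 dvd U + 1 \<and> 4 dvd A + P + 1 \<and> 4 dvd B + P + 3)) \<or>
    (\<not> (2 dvd U + 2 \<and> 4 dvd A + 2 \<and> 4 dvd B + 2) \<and> \<not> (2 dvd U + 1 \<and> 4 dvd A + P + 3 \<and> 4 dvd B + P + 1) \<and> (2 dvd U + 1 \<and> 4 dvd A + P + 1 \<and> 4 dvd B + P + 3))"
  using assms by presburger

lemma presD:
  fixes A B U zp k1 k2 k3 zp1 P :: int
  assumes "A = (P+1)*U + 2*zp + 2*k1" "B = (P+1)*U + 2*zp + 2*k2" "U = 2*k3 + k1 + k2 - 2*zp + 2*zp1"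
  shows "(2 dvd U \<and> 4 dvd A \<and> 4 dvd B) \<or>
    ((2 dvd U + 2 \<and> 4 dvd A + 2 \<and> 4 dvd B + 2) \<and> \<not> (2 dvd U + 1 \<and> 4 dvd A + P + 3 \<and> 4 dvd B + P + 1) \<and> \<not> (2 dvd U + 1 \<and> 4 dvd A + P + 1 \<and> 4 dvd B + P + 3)) \<or>
    (\<not> (2 dvd U + 2 \<and> 4 dvd A + 2 \<and> 4 dvd B + 2) \<and> (2 dvd U + 1 \<and> 4 dvd A + P + 3 \<and> 4 dvd B + P + 1) \<and> \<not> (2 dvd U + 1 \<and> 4 dvd A + P + 1 \<and> 4 dvd B + P + 3)) \<or>
    (\<not> (2 dvd U + 2 \<and> 4 dvd A + 2 \<and> 4 dvd B + 2) \<and> \<not> (2 dvd U + 1 \<and> 4 dvd A + P + 3 \<and> 4 dvd B + P + 1) \<and> (2 dvd U + 1 \<and> 4 dvd A + P + 1 \<and> 4 dvd B + P + 3))"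
proof (cases "even U")
  case True
  then obtain V where V: "U = 2 * V" by (auto elim: evenE)
  have "(P+1)*U = 2 * ((P+1)*V)" using V by simp
  then show ?thesis using presD0[of A "(P+1)*V" zp k1 B k2 U V k3 zp1 P] assms V by simp
next
  case False
  then obtain V where V: "U = 2 * V + 1" by (auto elim: oddE)
  have "(P+1)*U = 2 * ((P+1)*V) + P + 1" using V by (simp add: algebra_simps)
  then show ?thesis using presD1[of A "(P+1)*V" P zp k1 B k2 U V k3 zp1] assms V by simp
qed

lemma frac_Ints_iff:
  assumes "d * x = (of_int X :: real)" "d = of_int D" "D \<noteq> 0"
  shows "x + of_int s / d \<in> \<int> \<longleftrightarrow> D dvd X + s"
proof
  assume "x + of_int s / d \<in> \<int>"
  then obtain k where k: "x + of_int s / d = of_int k" by (auto elim: Ints_cases)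
  have "of_int (X + s) = d * (x + of_int s / d)" using assms by (simp add: field_simps)
  also have "\<dots> = of_int (D * k)" using k assms(2) by simp
  finally have "X + s = D * k" by (simp only: of_int_eq_iff)
  then show "D dvd X + s" by simp
next
  assume "D dvd X + s"
  then obtain k where k: "X + s = D * k" by (auto elim: dvdE)
  have "x + of_int s / d = of_int (X + s) / d" using assms by (simp add: field_simps)
  also have "\<dots> = of_int k" using k assms by simp
  finally show "x + of_int s / d \<in> \<int>" by simp
qed

lemma coreD:
  fixes u a bb qp qp1 :: real and p :: nat
  assumes h1: "qp - real (Suc p) * u \<in> \<int>" and h2: "qp1 - real p * u \<in> \<int>"
    and h3: "2 * a - qp \<in> \<int>" and h4: "2 * bb - qp \<in> \<int>" and h5: "2 * qp - qp1 - a - bb \<in> \<int>"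
  defines "T0 \<equiv> u + 1 \<in> \<int> \<and> a + 1/2 \<in> \<int> \<and> bb + 1/2 \<in> \<int>"
    and "T1 \<equiv> u + 1/2 \<in> \<int> \<and> a + (real p + 3)/4 \<in> \<int> \<and> bb + (real p + 1)/4 \<in> \<int>"
    and "T2 \<equiv> u + 1/2 \<in> \<int> \<and> a + (real p + 1)/4 \<in> \<int> \<and> bb + (real p + 3)/4 \<in> \<int>"
  shows "(u \<in> \<int> \<and> a \<in> \<int> \<and> bb \<in> \<int>) \<or> (T0 \<and> \<not> T1 \<and> \<not> T2) \<or> (\<not> T0 \<and> T1 \<and> \<not> T2) \<or> (\<not> T0 \<and> \<not> T1 \<and> T2)"
proof -
  obtain zp where zp: "qp - real (Suc p) * u = of_int zp" using h1 by (auto elim: Ints_cases)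
  obtain zp1 where zp1: "qp1 - real p * u = of_int zp1" using h2 by (auto elim: Ints_cases)
  obtain k1 where k1: "2 * a - qp = of_int k1" using h3 by (auto elim: Ints_cases)
  obtain k2 where k2: "2 * bb - qp = of_int k2" using h4 by (auto elim: Ints_cases)
  obtain k3 where k3: "2 * qp - qp1 - a - bb = of_int k3" using h5 by (auto elim: Ints_cases)
  define U where "U = 2*k3 + k1 + k2 - 2*zp + 2*zp1"
  define P where "P = int p"
  define A where "A = (P+1)*U + 2*zp + 2*k1"
  define B where "B = (P+1)*U + 2*zp + 2*k2"
  have pu: "real (Suc p) * u = real p * u + u" by (simp add: algebra_simps)
  have U': "of_int U = 2 * of_int k3 + of_int k1 + of_int k2 - 2 * of_int zp + 2 * (of_int zp1 :: real)"
    by (simp add: U_def)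
  have U2: "2 * u = of_int U" using U' zp zp1 k1 k2 k3 pu by linarith
  have PU: "of_int ((P+1)*U) = 2 * (real (Suc p) * u)" using U2 by (simp add: P_def algebra_simps)
  have A4: "4 * a = of_int A"
  proof -
    have "of_int A = of_int ((P+1)*U) + 2 * of_int zp + 2 * (of_int k1 :: real)" by (simp add: A_def)
    then show ?thesis using PU zp k1 by linarith
  qed
  have B4: "4 * bb = of_int B"
  proof -
    have "of_int B = of_int ((P+1)*U) + 2 * of_int zp + 2 * (of_int k2 :: real)" by (simp add: B_def)
    then show ?thesis using PU zp k2 by linarith
  qed
  have cu: "u + of_int s / 2 \<in> \<int> \<longleftrightarrow> 2 dvd U + s" for s by (rule frac_Ints_iff[OF U2]) simp_all
  have ca: "a + of_int s / 4 \<in> \<int> \<longleftrightarrow> 4 dvd A + s" for s by (rule frac_Ints_iff[OF A4]) simp_all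
  have cb: "bb + of_int s / 4 \<in> \<int> \<longleftrightarrow> 4 dvd B + s" for s by (rule frac_Ints_iff[OF B4]) simp_all
  have e1: "u \<in> \<int> \<longleftrightarrow> 2 dvd U" using cu[of 0] by simp
  have e2: "a \<in> \<int> \<longleftrightarrow> 4 dvd A" using ca[of 0] by simp
  have e3: "bb \<in> \<int> \<longleftrightarrow> 4 dvd B" using cb[of 0] by simp
  have e4: "u + 1 \<in> \<int> \<longleftrightarrow> 2 dvd U + 2" using cu[of 2] by simp
  have e5: "u + 1/2 \<in> \<int> \<longleftrightarrow> 2 dvd U + 1" using cu[of 1] by simp
  have e6: "a + 1/2 \<in> \<int> \<longleftrightarrow> 4 dvd A + 2" using ca[of 2] by simp
  have e7: "bb + 1/2 \<in> \<int> \<longleftrightarrow> 4 dvd B + 2" using cb[of 2] by simp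
  have e8: "a + (real p + 3)/4 \<in> \<int> \<longleftrightarrow> 4 dvd A + P + 3" using ca[of "P + 3"] by (simp add: P_def add.assoc)
  have e9: "a + (real p + 1)/4 \<in> \<int> \<longleftrightarrow> 4 dvd A + P + 1" using ca[of "P + 1"] by (simp add: P_def add.assoc)
  have e10: "bb + (real p + 3)/4 \<in> \<int> \<longleftrightarrow> 4 dvd B + P + 3" using cb[of "P + 3"] by (simp add: P_def add.assoc)
  have e11: "bb + (real p + 1)/4 \<in> \<int> \<longleftrightarrow> 4 dvd B + P + 1" using cb[of "P + 1"] by (simp add: P_def add.assoc)
  show ?thesis unfolding T0_def T1_def T2_def e1 e2 e3 e4 e5 e6 e7 e8 e9 e10 e11
    by (rule presD[OF A_def B_def U_def])
qed

context cartan begin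

lemma pint_add: "\<forall>j<n. lc q \<bullet> b j \<in> \<int> \<Longrightarrow> \<forall>j<n. lc w \<bullet> b j \<in> \<int> \<Longrightarrow> \<forall>j<n. lc (\<lambda>i. q i + w i) \<bullet> b j \<in> \<int>"
  by (simp add: lc_add inner_add_left)

lemma constraintsD:
  assumes D: "adj = adjD n" "n = Suc (Suc (Suc p))" "p \<ge> 1" and pint: "\<forall>j<n. lc q \<bullet> b j \<in> \<int>"
  shows "\<forall>j\<le>p. q j - real (Suc j) * q 0 \<in> \<int>"
    and "2 * q (Suc p) - q p \<in> \<int>" and "2 * q (Suc (Suc p)) - q p \<in> \<int>"
    and "2 * q p - q (p - 1) - q (Suc p) - q (Suc (Suc p)) \<in> \<int>"
proof -
  have pj: "lc q \<bullet> b j \<in> \<int>" if "j < n" for j using pint that by simp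
  have ch: "2 * q j - (if 0 < j then q (j - 1) else 0) - q (Suc j) \<in> \<int>" if j: "j < p" for j
  proof -
    have jn: "j < n" using j D(2) by simp
    have "lc q \<bullet> b j = 2 * q j - (if 0 < j then q (j - 1) else 0) - q (Suc j)"
      using innerD[OF D(1,2) jn, of q] j by simp
    then show ?thesis using pj[OF jn] by simp
  qed
  let ?X = "extA n q"
  have H: "2 * ?X k - ?X (k - 1) - ?X (Suc k) \<in> \<int>" if k: "1 \<le> k" "k \<le> p" for k
  proof -
    have eq: "2 * ?X k - ?X (k - 1) - ?X (Suc k) = 2 * q (k-1) - (if 0 < k-1 then q (k-1-1) else 0) - q (Suc (k-1))"
      using k D(2) by (auto simp: extA_def)
    show ?thesis unfolding eq by (rule ch) (use k in simp)
  qed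
  have C: "?X k - of_nat k * ?X 1 \<in> \<int>" if "k \<le> Suc p" for k
    by (rule chain_cong[where X="?X" and L=p, OF _ H that]) (simp_all add: extA_def)
  show "\<forall>j\<le>p. q j - real (Suc j) * q 0 \<in> \<int>"
  proof (intro allI impI)
    fix j assume j: "j \<le> p"
    have "?X (Suc j) = q j" "?X 1 = q 0" using j D(2) by (simp_all add: extA_def)
    then show "q j - real (Suc j) * q 0 \<in> \<int>" using C[of "Suc j"] j by simp
  qed
  have n1: "Suc p < n" using D(2) by simp
  have "lc q \<bullet> b (Suc p) = 2 * q (Suc p) - q p" using innerD[OF D(1,2) n1, of q] by simp
  then show "2 * q (Suc p) - q p \<in> \<int>" using pj[OF n1] by simp
  have n2: "Suc (Suc p) < n" using D(2) by simp
  have "lc q \<bullet> b (Suc (Suc p)) = 2 * q (Suc (Suc p)) - q p" using innerD[OF D(1,2) n2, of q] by simp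
  then show "2 * q (Suc (Suc p)) - q p \<in> \<int>" using pj[OF n2] by simp
  have n3: "p < n" using D(2) by simp
  have "lc q \<bullet> b p = 2 * q p - q (p - 1) - q (Suc p) - q (Suc (Suc p))" using innerD[OF D(1,2) n3, of q] D(3) by simp
  then show "2 * q p - q (p - 1) - q (Suc p) - q (Suc (Suc p)) \<in> \<int>" using pj[OF n3] by simp
qed

lemma testD:
  assumes D: "adj = adjD n" "n = Suc (Suc (Suc p))" "p \<ge> 1" and pint: "\<forall>j<n. lc z \<bullet> b j \<in> \<int>"
    and z: "z 0 \<in> \<int>" "z (Suc p) \<in> \<int>" "z (Suc (Suc p)) \<in> \<int>"
  shows "\<forall>i<n. z i \<in> \<int>"
proof (intro allI impI)
  fix i assume i: "i < n"
  have ch: "\<forall>j\<le>p. z j - real (Suc j) * z 0 \<in> \<int>" by (rule constraintsD(1)[OF D pint])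
  consider "i \<le> p" | "i = Suc p" | "i = Suc (Suc p)" using i D(2) by linarith
  then show "z i \<in> \<int>"
  proof cases
    case 1
    then have "z i - real (Suc i) * z 0 \<in> \<int>" using ch by simp
    moreover have "real (Suc i) * z 0 \<in> \<int>" using z(1) by simp
    ultimately have "(z i - real (Suc i) * z 0) + real (Suc i) * z 0 \<in> \<int>" by (rule Ints_add)
    then show ?thesis by simp
  qed (use z in simp_all)
qed

end

context cartan begin

lemma classD:
  assumes D: "adj = adjD n" "n = Suc (Suc (Suc p))" "p \<ge> 1" and pint: "\<forall>j<n. lc q \<bullet> b j \<in> \<int>"
  shows "(\<forall>i<n. q i \<in> \<int>) \<or> (\<exists>!r. r < n \<and> mD n r = 1 \<and> (\<forall>i<n. q i + wD n r i \<in> \<int>))"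
proof -
  let ?J = "\<lambda>r. r = 0 \<or> r = Suc p \<or> r = Suc (Suc p)"
  have Jm: "r < n \<and> mD n r = 1 \<longleftrightarrow> ?J r" for r using D(2) by (auto simp: mD_def)
  have c1: "\<forall>j\<le>p. q j - real (Suc j) * q 0 \<in> \<int>" by (rule constraintsD(1)[OF D pint])
  have h1: "q p - real (Suc p) * q 0 \<in> \<int>" using c1 by simp
  have h2: "q (p - 1) - real p * q 0 \<in> \<int>" using c1[rule_format, of "p - 1"] D(3) by simp
  have h3: "2 * q (Suc p) - q p \<in> \<int>" by (rule constraintsD(2)[OF D pint])
  have h4: "2 * q (Suc (Suc p)) - q p \<in> \<int>" by (rule constraintsD(3)[OF D pint])
  have h5: "2 * q p - q (p - 1) - q (Suc p) - q (Suc (Suc p)) \<in> \<int>" by (rule constraintsD(4)[OF D pint])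
  define Z where "Z r \<longleftrightarrow> q 0 + wD n r 0 \<in> \<int> \<and> q (Suc p) + wD n r (Suc p) \<in> \<int> \<and> q (Suc (Suc p)) + wD n r (Suc (Suc p)) \<in> \<int>" for r
  have Z0: "Z 0 \<longleftrightarrow> q 0 + 1 \<in> \<int> \<and> q (Suc p) + 1/2 \<in> \<int> \<and> q (Suc (Suc p)) + 1/2 \<in> \<int>"
    unfolding Z_def wD_def using D(2) by simp
  have Z1: "Z (Suc p) \<longleftrightarrow> q 0 + 1/2 \<in> \<int> \<and> q (Suc p) + (real p + 3)/4 \<in> \<int> \<and> q (Suc (Suc p)) + (real p + 1)/4 \<in> \<int>"
    unfolding Z_def wD_def using D(2) by (simp add: add.commute)
  have Z2: "Z (Suc (Suc p)) \<longleftrightarrow> q 0 + 1/2 \<in> \<int> \<and> q (Suc p) + (real p + 1)/4 \<in> \<int> \<and> q (Suc (Suc p)) + (real p + 3)/4 \<in> \<int>"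
    unfolding Z_def wD_def using D(2) by (simp add: add.commute)
  have full: "(\<forall>i<n. q i + wD n r i \<in> \<int>) \<longleftrightarrow> Z r" if r: "?J r" for r
  proof
    assume "\<forall>i<n. q i + wD n r i \<in> \<int>"
    then show "Z r" unfolding Z_def using D(2) by simp
  next
    assume z: "Z r"
    have wp: "\<forall>j<n. lc (wD n r) \<bullet> b j \<in> \<int>" using wpairD[OF D r] by simp
    show "\<forall>i<n. q i + wD n r i \<in> \<int>"
      by (rule testD[OF D pint_add[OF pint wp]]) (use z in \<open>simp_all add: Z_def\<close>)
  qed
  have allint: "(\<forall>i<n. q i \<in> \<int>) \<longleftrightarrow> q 0 \<in> \<int> \<and> q (Suc p) \<in> \<int> \<and> q (Suc (Suc p)) \<in> \<int>"
  proof
    assume "\<forall>i<n. q i \<in> \<int>" then show "q 0 \<in> \<int> \<and> q (Suc p) \<in> \<int> \<and> q (Suc (Suc p)) \<in> \<int>" using D(2) by simp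
  next
    assume "q 0 \<in> \<int> \<and> q (Suc p) \<in> \<int> \<and> q (Suc (Suc p)) \<in> \<int>"
    then show "\<forall>i<n. q i \<in> \<int>" using testD[OF D pint] by simp
  qed
  have core: "(q 0 \<in> \<int> \<and> q (Suc p) \<in> \<int> \<and> q (Suc (Suc p)) \<in> \<int>) \<or> (Z 0 \<and> \<not> Z (Suc p) \<and> \<not> Z (Suc (Suc p)))
     \<or> (\<not> Z 0 \<and> Z (Suc p) \<and> \<not> Z (Suc (Suc p))) \<or> (\<not> Z 0 \<and> \<not> Z (Suc p) \<and> Z (Suc (Suc p)))"
    unfolding Z0 Z1 Z2 by (rule coreD[OF h1 h2 h3 h4 h5])
  have E: "(\<exists>!r. r < n \<and> mD n r = 1 \<and> (\<forall>i<n. q i + wD n r i \<in> \<int>)) \<longleftrightarrow> (\<exists>!r. ?J r \<and> Z r)"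
  proof -
    have "(r < n \<and> mD n r = 1 \<and> (\<forall>i<n. q i + wD n r i \<in> \<int>)) \<longleftrightarrow> (?J r \<and> Z r)" for r
      using Jm[of r] full[of r] by blast
    then show ?thesis by simp
  qed
  have ne: "0 \<noteq> Suc p" "0 \<noteq> Suc (Suc p)" "Suc p \<noteq> Suc (Suc p)" by simp_all
  show ?thesis unfolding E allint
    using core ne by (elim disjE) (simp, (rule disjI2, blast)+)
qed

lemma typeD:
  assumes "adj = adjD n" "n \<ge> 4" "y \<in> dual_lattice (zspan (b ` {..<n}))"
  shows "canon_rep (b ` {..<n}) (cls (b ` {..<n}) y) - y \<in> zspan (b ` {..<n})"
proof -
  have "n = Suc (Suc (Suc (n - 3)))" "n - 3 \<ge> 1" using assms(2) by auto
  then obtain p where p: "n = Suc (Suc (Suc p))" "p \<ge> 1" by blast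
  show ?thesis
  proof (rule main_gen[where m="mD n" and w="wD n"])
    show "lc (\<lambda>i. of_int (mD n i)) \<bullet> lc (\<lambda>i. of_int (mD n i)) = 2" by (rule rootD[OF assms(1) p])
    show "\<forall>i<n. c i \<le> mD n i" if "lc (\<lambda>i. of_int (c i)) \<bullet> lc (\<lambda>i. of_int (c i)) = 2" for c
      by (rule boundD[OF assms(1) p that])
    show "wD n r i \<in> \<rat>" for r i by (simp add: wD_def)
    show "lc (wD n r) \<bullet> b j = (if j = r then 1 else 0)" if "r < n" "mD n r = 1" "j < n" for r j
    proof (rule wpairD[OF assms(1) p _ that(3)])
      show "r = 0 \<or> r = Suc p \<or> r = Suc (Suc p)" using that(1,2) p(1) by (auto simp: mD_def split: if_splits)
    qed
    show "(\<forall>i<n. q i \<in> \<int>) \<or> (\<exists>!r. r < n \<and> mD n r = 1 \<and> (\<forall>i<n. q i + wD n r i \<in> \<int>))"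
      if "\<forall>j<n. lc q \<bullet> b j \<in> \<int>" for q
      by (rule classD[OF assms(1) p that])
    show "y \<in> dual_lattice (zspan (b ` {..<n}))" by (rule assms(3))
  qed
qed

end

context cartan begin

lemma inv_formula:
  assumes "\<forall>j<n. lc w \<bullet> b j = (if j = i then 1 else 0)" "i < n"
  shows "q i = (\<Sum>j<n. w j * (lc q \<bullet> b j))"
proof -
  have "lc w \<bullet> lc q = (\<Sum>j<n. q j * (lc w \<bullet> b j))" by (rule lc_inner_lc)
  also have "\<dots> = (\<Sum>j<n. if j = i then q j else 0)" by (rule sum.cong) (use assms(1) in auto)
  also have "\<dots> = q i" using assms(2) by (simp add: sum.delta)
  finally have "q i = lc w \<bullet> lc q" by simp
  also have "\<dots> = lc q \<bullet> lc w" by (simp add: inner_commute)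
  also have "\<dots> = (\<Sum>j<n. w j * (lc q \<bullet> b j))" by (rule lc_inner_lc)
  finally show ?thesis .
qed

lemma cs_bound:
  assumes "\<forall>j<n. lc w \<bullet> b j = (if j = i then 1 else 0)" "i < n"
    and "lc q \<bullet> lc q = 2"
  shows "(q i)^2 \<le> 2 * w i"
proof -
  have qi: "q i = lc q \<bullet> lc w" using inv_formula[OF assms(1,2), of q] by (simp add: lc_inner_lc)
  have wi: "w i = lc w \<bullet> lc w" using inv_formula[OF assms(1,2), of w] by (simp add: lc_inner_lc)
  show ?thesis unfolding qi wi using Cauchy_Schwarz_ineq[of "lc q" "lc w"] assms(3) by (simp add: mult.commute)
qed

lemma cyc_disc:
  fixes N :: int and u :: "nat \<Rightarrow> int" and W :: "nat \<Rightarrow> nat \<Rightarrow> real" and J :: "nat set"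
  assumes Wp: "\<forall>i<n. \<forall>j<n. lc (W i) \<bullet> b j = (if j = i then 1 else 0)"
    and Wc: "\<forall>i<n. \<forall>j<n. W i j - of_int (u i * u j) / of_int N \<in> \<int>"
    and N: "N > 0" and iz: "iz < n" "u iz = 1"
    and Jsurj: "\<forall>t. \<not> N dvd t \<longrightarrow> (\<exists>r\<in>J. N dvd t + u r)"
    and Jinj: "\<forall>r\<in>J. \<forall>r'\<in>J. N dvd u r - u r' \<longrightarrow> r = r'"
    and Jn: "J \<subseteq> {..<n}"
    and pint: "\<forall>j<n. lc q \<bullet> b j \<in> \<int>"
  shows "(\<forall>i<n. q i \<in> \<int>) \<or> (\<exists>!r. r \<in> J \<and> (\<forall>i<n. q i + W r i \<in> \<int>))"
proof -
  have "\<forall>j<n. \<exists>P. lc q \<bullet> b j = of_int P" using pint by (auto elim: Ints_cases)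
  then obtain P where P: "\<forall>j<n. lc q \<bullet> b j = of_int (P j)" by metis
  define s where "s = (\<Sum>j<n. u j * P j)"
  have qi: "q i - of_int (u i) * of_int s / of_int N \<in> \<int>" if i: "i < n" for i
  proof -
    have "q i = (\<Sum>j<n. W i j * of_int (P j))"
      using inv_formula[of "W i" i q] Wp i P by simp
    then have "q i - of_int (u i) * of_int s / of_int N = (\<Sum>j<n. (W i j - of_int (u i * u j) / of_int N) * of_int (P j))"
      unfolding s_def by (simp add: sum_subtractf sum_divide_distrib sum_distrib_left algebra_simps)
    also have "\<dots> \<in> \<int>" using Wc i by (intro Ints_sum Ints_mult) auto
    finally show ?thesis .
  qed
  show ?thesis
  proof (cases "N dvd s")
    case True
    then obtain k where k: "s = N * k" by (auto elim: dvdE)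
    have "q i \<in> \<int>" if i: "i < n" for i
    proof -
      have "q i = (q i - of_int (u i) * of_int s / of_int N) + of_int (u i * k)" using k N by simp
      also have "\<dots> \<in> \<int>" by (rule Ints_add[OF qi[OF i] Ints_of_int])
      finally show ?thesis .
    qed
    then show ?thesis by simp
  next
    case False
    then obtain r where r: "r \<in> J" "N dvd s + u r" using Jsurj by blast
    then obtain k where k: "s + u r = N * k" by (auto elim: dvdE)
    have ex: "\<forall>i<n. q i + W r i \<in> \<int>"
    proof (intro allI impI)
      fix i assume i: "i < n"
      have rn: "r < n" using r(1) Jn by auto
      have "q i + W r i = (q i - of_int (u i) * of_int s / of_int N) + (W r i - of_int (u r * u i) / of_int N) + of_int (u i * k)"
      proof -
        have "of_int (u i) * of_int s / of_int N + of_int (u r * u i) / of_int N = (of_int (u i * (s + u r)) / of_int N :: real)"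
          by (simp add: algebra_simps add_divide_distrib)
        also have "\<dots> = of_int (u i * k)" using k N by simp
        finally show ?thesis by simp
      qed
      also have "\<dots> \<in> \<int>" using qi[OF i] Wc rn i by (intro Ints_add Ints_of_int) auto
      finally show "q i + W r i \<in> \<int>" .
    qed
    have uniq: "r1 = r2" if r1: "r1 \<in> J" "\<forall>i<n. q i + W r1 i \<in> \<int>" and r2: "r2 \<in> J" "\<forall>i<n. q i + W r2 i \<in> \<int>" for r1 r2
    proof -
      have I1: "(q iz + W r1 iz) - (q iz + W r2 iz) \<in> \<int>" using r1 r2 iz by (intro Ints_diff) auto
      have I23: "W r1 iz - of_int (u r1) / of_int N \<in> \<int>" "W r2 iz - of_int (u r2) / of_int N \<in> \<int>"
      proof -
        have rn: "r1 < n" "r2 < n" using Jn r1(1) r2(1) by auto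
        have "W r1 iz - of_int (u r1 * u iz) / of_int N \<in> \<int>" "W r2 iz - of_int (u r2 * u iz) / of_int N \<in> \<int>"
          using Wc rn iz(1) by blast+
        then show "W r1 iz - of_int (u r1) / of_int N \<in> \<int>" "W r2 iz - of_int (u r2) / of_int N \<in> \<int>"
          using iz(2) by simp_all
      qed
      have "((q iz + W r1 iz) - (q iz + W r2 iz)) - (W r1 iz - of_int (u r1) / of_int N) + (W r2 iz - of_int (u r2) / of_int N) \<in> \<int>"
        by (rule Ints_add[OF Ints_diff[OF I1 I23(1)] I23(2)])
      then have "of_int (u r1 - u r2) / (of_int N :: real) \<in> \<int>" by (simp add: diff_divide_distrib)
      then obtain z where "of_int (u r1 - u r2) / (of_int N :: real) = of_int z" by (auto elim: Ints_cases)
      then have "(of_int (u r1 - u r2) :: real) = of_int (N * z)" using N by (simp add: divide_eq_eq)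
      then have "u r1 - u r2 = N * z" by (simp only: of_int_eq_iff)
      then have "N dvd u r1 - u r2" by simp
      then show ?thesis using Jinj r1(1) r2(1) by blast
    qed
    show ?thesis using ex r(1) uniq by blast
  qed
qed

end

lemma sum6: "(\<Sum>k<(6::nat). f k) = f 0 + f 1 + f 2 + f 3 + f 4 + f 5"
  by (simp add: eval_nat_numeral ac_simps)

lemma lt6: "(i::nat) < 6 \<longleftrightarrow> i = 0 \<or> i = 1 \<or> i = 2 \<or> i = 3 \<or> i = 4 \<or> i = 5" by presburger

lemma all6: "(\<forall>i<(6::nat). P i) \<longleftrightarrow> P 0 \<and> P 1 \<and> P 2 \<and> P 3 \<and> P 4 \<and> P 5"
  unfolding lt6 by blast

definition tE6 :: "real list list" where "tE6 = [[4/3, 5/3, 2, 4/3, 2/3, 1], [5/3, 10/3, 4, 8/3, 4/3, 2], [2, 4, 6, 4, 2, 3], [4/3, 8/3, 4, 10/3, 5/3, 2], [2/3, 4/3, 2, 5/3, 4/3, 1], [1, 2, 3, 2, 1, 2]]"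

definition W6 :: "nat \<Rightarrow> nat \<Rightarrow> real" where "W6 i j = (if i < 6 \<and> j < 6 then tE6 ! i ! j else 0)"

definition mE6 :: "nat \<Rightarrow> int" where "mE6 i = [1, 2, 3, 2, 1, 2] ! i"

definition uE6 :: "nat \<Rightarrow> int" where "uE6 i = [1, 2, 0, 1, 2, 0] ! i"

lemma sum7: "(\<Sum>k<(7::nat). f k) = f 0 + f 1 + f 2 + f 3 + f 4 + f 5 + f 6"
  by (simp add: eval_nat_numeral ac_simps)

lemma lt7: "(i::nat) < 7 \<longleftrightarrow> i = 0 \<or> i = 1 \<or> i = 2 \<or> i = 3 \<or> i = 4 \<or> i = 5 \<or> i = 6" by presburger

lemma all7: "(\<forall>i<(7::nat). P i) \<longleftrightarrow> P 0 \<and> P 1 \<and> P 2 \<and> P 3 \<and> P 4 \<and> P 5 \<and> P 6"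
  unfolding lt7 by blast

definition tE7 :: "real list list" where "tE7 = [[2, 3, 4, 3, 2, 1, 2], [3, 6, 8, 6, 4, 2, 4], [4, 8, 12, 9, 6, 3, 6], [3, 6, 9, 15/2, 5, 5/2, 9/2], [2, 4, 6, 5, 4, 2, 3], [1, 2, 3, 5/2, 2, 3/2, 3/2], [2, 4, 6, 9/2, 3, 3/2, 7/2]]"

definition W7 :: "nat \<Rightarrow> nat \<Rightarrow> real" where "W7 i j = (if i < 7 \<and> j < 7 then tE7 ! i ! j else 0)"

definition mE7 :: "nat \<Rightarrow> int" where "mE7 i = [2, 3, 4, 3, 2, 1, 2] ! i"

definition uE7 :: "nat \<Rightarrow> int" where "uE7 i = [0, 0, 0, 1, 0, 1, 1] ! i"

lemma sum8: "(\<Sum>k<(8::nat). f k) = f 0 + f 1 + f 2 + f 3 + f 4 + f 5 + f 6 + f 7"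
  by (simp add: eval_nat_numeral ac_simps)

lemma lt8: "(i::nat) < 8 \<longleftrightarrow> i = 0 \<or> i = 1 \<or> i = 2 \<or> i = 3 \<or> i = 4 \<or> i = 5 \<or> i = 6 \<or> i = 7" by presburger

lemma all8: "(\<forall>i<(8::nat). P i) \<longleftrightarrow> P 0 \<and> P 1 \<and> P 2 \<and> P 3 \<and> P 4 \<and> P 5 \<and> P 6 \<and> P 7"
  unfolding lt8 by blast

definition tE8 :: "real list list" where "tE8 = [[4, 7, 10, 8, 6, 4, 2, 5], [7, 14, 20, 16, 12, 8, 4, 10], [10, 20, 30, 24, 18, 12, 6, 15], [8, 16, 24, 20, 15, 10, 5, 12], [6, 12, 18, 15, 12, 8, 4, 9], [4, 8, 12, 10, 8, 6, 3, 6], [2, 4, 6, 5, 4, 3, 2, 3], [5, 10, 15, 12, 9, 6, 3, 8]]"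

definition W8 :: "nat \<Rightarrow> nat \<Rightarrow> real" where "W8 i j = (if i < 8 \<and> j < 8 then tE8 ! i ! j else 0)"

definition mE8 :: "nat \<Rightarrow> int" where "mE8 i = [2, 4, 6, 5, 4, 3, 2, 3] ! i"

definition uE8 :: "nat \<Rightarrow> int" where "uE8 i = [1, 1, 1, 1, 1, 1, 1, 1] ! i"

lemma W6_pair: "i < 6 \<Longrightarrow> j < 6 \<Longrightarrow> (\<Sum>k<6. W6 i k * Gm (adjE 6) k j) = (if j = i then 1 else 0)"
  unfolding lt6 by (elim disjE) (simp_all add: sum6 W6_def tE6_def Gm_def adjE_def adjA_def)

lemma mE6_root: "(\<Sum>j<6. of_int (mE6 j) * (\<Sum>i<6. of_int (mE6 i) * Gm (adjE 6) i j)) = (2::real)"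
  by (simp add: sum6 mE6_def Gm_def adjE_def adjA_def)

lemma W7_pair: "i < 7 \<Longrightarrow> j < 7 \<Longrightarrow> (\<Sum>k<7. W7 i k * Gm (adjE 7) k j) = (if j = i then 1 else 0)"
  unfolding lt7 by (elim disjE) (simp_all add: sum7 W7_def tE7_def Gm_def adjE_def adjA_def)

lemma mE7_root: "(\<Sum>j<7. of_int (mE7 j) * (\<Sum>i<7. of_int (mE7 i) * Gm (adjE 7) i j)) = (2::real)"
  by (simp add: sum7 mE7_def Gm_def adjE_def adjA_def)

lemma W8_pair: "i < 8 \<Longrightarrow> j < 8 \<Longrightarrow> (\<Sum>k<8. W8 i k * Gm (adjE 8) k j) = (if j = i then 1 else 0)"
  unfolding lt8 by (elim disjE) (simp_all add: sum8 W8_def tE8_def Gm_def adjE_def adjA_def)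

lemma mE8_root: "(\<Sum>j<8. of_int (mE8 j) * (\<Sum>i<8. of_int (mE8 i) * Gm (adjE 8) i j)) = (2::real)"
  by (simp add: sum8 mE8_def Gm_def adjE_def adjA_def)

lemma sq_bound:
  fixes x k :: int and B :: real
  assumes "(of_int x)^2 \<le> B" "B < (of_int k + 1)^2" "0 \<le> k"
  shows "x \<le> k"
proof (rule ccontr)
  assume "\<not> x \<le> k"
  then have "of_int k + 1 \<le> (of_int x :: real)" by simp
  moreover have "0 \<le> (of_int k + 1 :: real)" using assms(3) by simp
  ultimately have "(of_int k + 1)^2 \<le> (of_int x :: real)^2" by (rule power_mono)
  then show False using assms(1,2) by simp
qed

lemma W6_rat: "W6 i j \<in> \<rat>"
proof (cases "i < 6 \<and> j < 6")
  case True
  then show ?thesis unfolding W6_def lt6 by (elim conjE disjE) (simp_all add: tE6_def)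
qed (auto simp: W6_def)

lemma W6_c: "i < 6 \<Longrightarrow> j < 6 \<Longrightarrow> W6 i j - of_int (uE6 i * uE6 j) / of_int 3 \<in> \<int>"
  unfolding lt6 by (elim disjE) (simp_all add: W6_def tE6_def uE6_def)

lemma mE6_bound: "i < 6 \<Longrightarrow> (of_int x)^2 \<le> 2 * W6 i i \<Longrightarrow> x \<le> mE6 i"
  unfolding lt6 by (elim disjE) (rule sq_bound, assumption, simp add: W6_def tE6_def mE6_def, simp add: mE6_def)+

lemma mE6_J: "{r. r < 6 \<and> mE6 r = 1} = {0, 4}"
  by (auto simp: lt6 mE6_def)

lemma mE6_Jsurj: "\<forall>t. \<not> 3 dvd t \<longrightarrow> (\<exists>r\<in>{0, 4}. 3 dvd t + uE6 r)"
  by (simp add: uE6_def, presburger?)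

lemma mE6_Jinj: "\<forall>r\<in>{0, 4}. \<forall>r'\<in>{0, 4}. 3 dvd uE6 r - uE6 r' \<longrightarrow> r = r'"
  by (simp add: uE6_def)

lemma W7_rat: "W7 i j \<in> \<rat>"
proof (cases "i < 7 \<and> j < 7")
  case True
  then show ?thesis unfolding W7_def lt7 by (elim conjE disjE) (simp_all add: tE7_def)
qed (auto simp: W7_def)

lemma W7_c: "i < 7 \<Longrightarrow> j < 7 \<Longrightarrow> W7 i j - of_int (uE7 i * uE7 j) / of_int 2 \<in> \<int>"
  unfolding lt7 by (elim disjE) (simp_all add: W7_def tE7_def uE7_def)

lemma mE7_bound: "i < 7 \<Longrightarrow> (of_int x)^2 \<le> 2 * W7 i i \<Longrightarrow> x \<le> mE7 i"
  unfolding lt7 by (elim disjE) (rule sq_bound, assumption, simp add: W7_def tE7_def mE7_def, simp add: mE7_def)+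

lemma mE7_J: "{r. r < 7 \<and> mE7 r = 1} = {5}"
  by (auto simp: lt7 mE7_def)

lemma mE7_Jsurj: "\<forall>t. \<not> 2 dvd t \<longrightarrow> (\<exists>r\<in>{5}. 2 dvd t + uE7 r)"
  by (simp add: uE7_def, presburger?)

lemma mE7_Jinj: "\<forall>r\<in>{5}. \<forall>r'\<in>{5}. 2 dvd uE7 r - uE7 r' \<longrightarrow> r = r'"
  by (simp add: uE7_def)

lemma W8_rat: "W8 i j \<in> \<rat>"
proof (cases "i < 8 \<and> j < 8")
  case True
  then show ?thesis unfolding W8_def lt8 by (elim conjE disjE) (simp_all add: tE8_def)
qed (auto simp: W8_def)

lemma W8_c: "i < 8 \<Longrightarrow> j < 8 \<Longrightarrow> W8 i j - of_int (uE8 i * uE8 j) / of_int 1 \<in> \<int>"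
  unfolding lt8 by (elim disjE) (simp_all add: W8_def tE8_def uE8_def)

lemma mE8_ne: "r < 8 \<Longrightarrow> mE8 r \<noteq> 1"
  unfolding lt8 by (elim disjE) (simp_all add: mE8_def)

context cartan begin

lemma Wp6:
  assumes "adj = adjE n" "n = 6"
  shows "\<forall>i<n. \<forall>j<n. lc (W6 i) \<bullet> b j = (if j = i then 1 else 0)"
proof (intro allI impI)
  fix i j assume i: "i < n" and j: "j < n"
  have "lc (W6 i) \<bullet> b j = (\<Sum>k<n. W6 i k * Gm adj k j)" by (rule lc_inner[OF j])
  also have "\<dots> = (\<Sum>k<6. W6 i k * Gm (adjE 6) k j)" using assms by simp
  also have "\<dots> = (if j = i then 1 else 0)" by (rule W6_pair) (use assms(2) i j in simp_all)
  finally show "lc (W6 i) \<bullet> b j = (if j = i then 1 else 0)" .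
qed

lemma hcl6:
  assumes "adj = adjE n" "n = 6" "\<forall>j<n. lc q \<bullet> b j \<in> \<int>"
  shows "(\<forall>i<n. q i \<in> \<int>) \<or> (\<exists>!r. r \<in> {r. r < n \<and> mE6 r = 1} \<and> (\<forall>i<n. q i + W6 r i \<in> \<int>))"
proof (rule cyc_disc[where N=3 and u=uE6 and iz=0])
  show "\<forall>i<n. \<forall>j<n. lc (W6 i) \<bullet> b j = (if j = i then 1 else 0)" by (rule Wp6[OF assms(1,2)])
  show "\<forall>i<n. \<forall>j<n. W6 i j - of_int (uE6 i * uE6 j) / of_int 3 \<in> \<int>"
    using W6_c assms(2) by simp
  show "(0::int) < 3" by simp
  show "0 < n" "uE6 0 = 1" using assms(2) by (simp_all add: uE6_def)
  show "{r. r < n \<and> mE6 r = 1} \<subseteq> {..<n}" by auto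
  show "\<forall>j<n. lc q \<bullet> b j \<in> \<int>" by (rule assms(3))

  show "\<forall>t. \<not> 3 dvd t \<longrightarrow> (\<exists>r\<in>{r. r < n \<and> mE6 r = 1}. 3 dvd t + uE6 r)"
    using mE6_Jsurj mE6_J assms(2) by simp
  show "\<forall>r\<in>{r. r < n \<and> mE6 r = 1}. \<forall>r'\<in>{r. r < n \<and> mE6 r = 1}. 3 dvd uE6 r - uE6 r' \<longrightarrow> r = r'"
    using mE6_Jinj mE6_J assms(2) by simp
qed

lemma typeE6:
  assumes "adj = adjE n" "n = 6" "y \<in> dual_lattice (zspan (b ` {..<n}))"
  shows "canon_rep (b ` {..<n}) (cls (b ` {..<n}) y) - y \<in> zspan (b ` {..<n})"
proof (rule main_gen[where m=mE6 and w=W6])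
  have Wp: "\<forall>i<n. \<forall>j<n. lc (W6 i) \<bullet> b j = (if j = i then 1 else 0)" by (rule Wp6[OF assms(1,2)])
  have "lc (\<lambda>i. of_int (mE6 i)) \<bullet> lc (\<lambda>i. of_int (mE6 i)) = (\<Sum>j<n. of_int (mE6 j) * (lc (\<lambda>i. of_int (mE6 i)) \<bullet> b j))"
    by (rule lc_inner_lc)
  also have "\<dots> = (\<Sum>j<n. of_int (mE6 j) * (\<Sum>i<n. of_int (mE6 i) * Gm adj i j))"
    by (rule sum.cong) (simp_all add: lc_inner)
  also have "\<dots> = 2" using mE6_root assms(1,2) by simp
  finally show "lc (\<lambda>i. of_int (mE6 i)) \<bullet> lc (\<lambda>i. of_int (mE6 i)) = 2" .
  show "\<forall>i<n. c i \<le> mE6 i" if c: "lc (\<lambda>i. of_int (c i)) \<bullet> lc (\<lambda>i. of_int (c i)) = 2" for c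
  proof (intro allI impI)
    fix i assume i: "i < n"
    have "(of_int (c i))^2 \<le> 2 * W6 i i"
      using cs_bound[of "W6 i" i "\<lambda>i. of_int (c i)"] Wp i c by simp
    then show "c i \<le> mE6 i" using mE6_bound i assms(2) by simp
  qed
  show "W6 r i \<in> \<rat>" for r i by (rule W6_rat)
  show "lc (W6 r) \<bullet> b j = (if j = r then 1 else 0)" if "r < n" "j < n" for r j using Wp that by simp
  show "(\<forall>i<n. q i \<in> \<int>) \<or> (\<exists>!r. r < n \<and> mE6 r = 1 \<and> (\<forall>i<n. q i + W6 r i \<in> \<int>))"
    if "\<forall>j<n. lc q \<bullet> b j \<in> \<int>" for q
    using hcl6[OF assms(1,2) that] by simp
  show "y \<in> dual_lattice (zspan (b ` {..<n}))" by (rule assms(3))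
qed

lemma Wp7:
  assumes "adj = adjE n" "n = 7"
  shows "\<forall>i<n. \<forall>j<n. lc (W7 i) \<bullet> b j = (if j = i then 1 else 0)"
proof (intro allI impI)
  fix i j assume i: "i < n" and j: "j < n"
  have "lc (W7 i) \<bullet> b j = (\<Sum>k<n. W7 i k * Gm adj k j)" by (rule lc_inner[OF j])
  also have "\<dots> = (\<Sum>k<7. W7 i k * Gm (adjE 7) k j)" using assms by simp
  also have "\<dots> = (if j = i then 1 else 0)" by (rule W7_pair) (use assms(2) i j in simp_all)
  finally show "lc (W7 i) \<bullet> b j = (if j = i then 1 else 0)" .
qed

lemma hcl7:
  assumes "adj = adjE n" "n = 7" "\<forall>j<n. lc q \<bullet> b j \<in> \<int>"
  shows "(\<forall>i<n. q i \<in> \<int>) \<or> (\<exists>!r. r \<in> {r. r < n \<and> mE7 r = 1} \<and> (\<forall>i<n. q i + W7 r i \<in> \<int>))"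
proof (rule cyc_disc[where N=2 and u=uE7 and iz=3])
  show "\<forall>i<n. \<forall>j<n. lc (W7 i) \<bullet> b j = (if j = i then 1 else 0)" by (rule Wp7[OF assms(1,2)])
  show "\<forall>i<n. \<forall>j<n. W7 i j - of_int (uE7 i * uE7 j) / of_int 2 \<in> \<int>"
    using W7_c assms(2) by simp
  show "(0::int) < 2" by simp
  show "3 < n" "uE7 3 = 1" using assms(2) by (simp_all add: uE7_def)
  show "{r. r < n \<and> mE7 r = 1} \<subseteq> {..<n}" by auto
  show "\<forall>j<n. lc q \<bullet> b j \<in> \<int>" by (rule assms(3))

  show "\<forall>t. \<not> 2 dvd t \<longrightarrow> (\<exists>r\<in>{r. r < n \<and> mE7 r = 1}. 2 dvd t + uE7 r)"
    using mE7_Jsurj mE7_J assms(2) by simp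
  show "\<forall>r\<in>{r. r < n \<and> mE7 r = 1}. \<forall>r'\<in>{r. r < n \<and> mE7 r = 1}. 2 dvd uE7 r - uE7 r' \<longrightarrow> r = r'"
    using mE7_Jinj mE7_J assms(2) by simp
qed

lemma typeE7:
  assumes "adj = adjE n" "n = 7" "y \<in> dual_lattice (zspan (b ` {..<n}))"
  shows "canon_rep (b ` {..<n}) (cls (b ` {..<n}) y) - y \<in> zspan (b ` {..<n})"
proof (rule main_gen[where m=mE7 and w=W7])
  have Wp: "\<forall>i<n. \<forall>j<n. lc (W7 i) \<bullet> b j = (if j = i then 1 else 0)" by (rule Wp7[OF assms(1,2)])
  have "lc (\<lambda>i. of_int (mE7 i)) \<bullet> lc (\<lambda>i. of_int (mE7 i)) = (\<Sum>j<n. of_int (mE7 j) * (lc (\<lambda>i. of_int (mE7 i)) \<bullet> b j))"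
    by (rule lc_inner_lc)
  also have "\<dots> = (\<Sum>j<n. of_int (mE7 j) * (\<Sum>i<n. of_int (mE7 i) * Gm adj i j))"
    by (rule sum.cong) (simp_all add: lc_inner)
  also have "\<dots> = 2" using mE7_root assms(1,2) by simp
  finally show "lc (\<lambda>i. of_int (mE7 i)) \<bullet> lc (\<lambda>i. of_int (mE7 i)) = 2" .
  show "\<forall>i<n. c i \<le> mE7 i" if c: "lc (\<lambda>i. of_int (c i)) \<bullet> lc (\<lambda>i. of_int (c i)) = 2" for c
  proof (intro allI impI)
    fix i assume i: "i < n"
    have "(of_int (c i))^2 \<le> 2 * W7 i i"
      using cs_bound[of "W7 i" i "\<lambda>i. of_int (c i)"] Wp i c by simp
    then show "c i \<le> mE7 i" using mE7_bound i assms(2) by simp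
  qed
  show "W7 r i \<in> \<rat>" for r i by (rule W7_rat)
  show "lc (W7 r) \<bullet> b j = (if j = r then 1 else 0)" if "r < n" "j < n" for r j using Wp that by simp
  show "(\<forall>i<n. q i \<in> \<int>) \<or> (\<exists>!r. r < n \<and> mE7 r = 1 \<and> (\<forall>i<n. q i + W7 r i \<in> \<int>))"
    if "\<forall>j<n. lc q \<bullet> b j \<in> \<int>" for q
    using hcl7[OF assms(1,2) that] by simp
  show "y \<in> dual_lattice (zspan (b ` {..<n}))" by (rule assms(3))
qed

lemma Wp8:
  assumes "adj = adjE n" "n = 8"
  shows "\<forall>i<n. \<forall>j<n. lc (W8 i) \<bullet> b j = (if j = i then 1 else 0)"
proof (intro allI impI)
  fix i j assume i: "i < n" and j: "j < n"
  have "lc (W8 i) \<bullet> b j = (\<Sum>k<n. W8 i k * Gm adj k j)" by (rule lc_inner[OF j])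
  also have "\<dots> = (\<Sum>k<8. W8 i k * Gm (adjE 8) k j)" using assms by simp
  also have "\<dots> = (if j = i then 1 else 0)" by (rule W8_pair) (use assms(2) i j in simp_all)
  finally show "lc (W8 i) \<bullet> b j = (if j = i then 1 else 0)" .
qed

lemma hcl8:
  assumes "adj = adjE n" "n = 8" "\<forall>j<n. lc q \<bullet> b j \<in> \<int>"
  shows "(\<forall>i<n. q i \<in> \<int>) \<or> (\<exists>!r. r \<in> {r. r < n \<and> mE8 r = 1} \<and> (\<forall>i<n. q i + W8 r i \<in> \<int>))"
proof (rule cyc_disc[where N=1 and u=uE8 and iz=0])
  show "\<forall>i<n. \<forall>j<n. lc (W8 i) \<bullet> b j = (if j = i then 1 else 0)" by (rule Wp8[OF assms(1,2)])
  show "\<forall>i<n. \<forall>j<n. W8 i j - of_int (uE8 i * uE8 j) / of_int 1 \<in> \<int>"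
    using W8_c assms(2) by simp
  show "(0::int) < 1" by simp
  show "0 < n" "uE8 0 = 1" using assms(2) by (simp_all add: uE8_def)
  show "{r. r < n \<and> mE8 r = 1} \<subseteq> {..<n}" by auto
  show "\<forall>j<n. lc q \<bullet> b j \<in> \<int>" by (rule assms(3))

  show "\<forall>t. \<not> 1 dvd t \<longrightarrow> (\<exists>r\<in>{r. r < n \<and> mE8 r = 1}. 1 dvd t + uE8 r)" by simp
  show "\<forall>r\<in>{r. r < n \<and> mE8 r = 1}. \<forall>r'\<in>{r. r < n \<and> mE8 r = 1}. 1 dvd uE8 r - uE8 r' \<longrightarrow> r = r'"
    using assms(2) mE8_ne by auto
qed

lemma typeE8:
  assumes "adj = adjE n" "n = 8" "y \<in> dual_lattice (zspan (b ` {..<n}))"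
  shows "canon_rep (b ` {..<n}) (cls (b ` {..<n}) y) - y \<in> zspan (b ` {..<n})"
proof (rule main_unimod[OF _ assms(3)])
  fix q assume pq: "\<forall>j<n. lc q \<bullet> b j \<in> \<int>"
  have J: "{r. r < n \<and> mE8 r = 1} = {}" using assms(2) mE8_ne by auto
  from hcl8[OF assms(1,2) pq] show "\<forall>i<n. q i \<in> \<int>" unfolding J by auto
qed

lemma typeE:
  assumes "adj = adjE n" "n \<in> {6,7,8}" "y \<in> dual_lattice (zspan (b ` {..<n}))"
  shows "canon_rep (b ` {..<n}) (cls (b ` {..<n}) y) - y \<in> zspan (b ` {..<n})"
  using assms typeE6[OF assms(1) _ assms(3)] typeE7[OF assms(1) _ assms(3)] typeE8[OF assms(1) _ assms(3)] by auto

end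

lemma cartan_from:
  assumes f: "bij_betw f C {..<k}"
    and zi: "z_indep C" and nn: "\<forall>u\<in>C. u \<bullet> u = 2"
    and pr: "\<forall>u\<in>C. \<forall>v\<in>C. u \<noteq> v \<longrightarrow> negform u v \<in> {0, 1}"
    and ad: "\<forall>u\<in>C. \<forall>v\<in>C. dual_edge u v \<longleftrightarrow> A (f u) (f v)"
  shows "cartan (inv_into C f) k A" and "inv_into C f ` {..<k} = C"
proof -
  let ?b = "inv_into C f"
  have img: "?b ` {..<k} = C" using f by (simp add: bij_betw_inv_into bij_betw_imp_surj_on)
  have bij: "bij_betw ?b {..<k} C" using f by (rule bij_betw_inv_into)
  have fb: "f (?b i) = i" if "i < k" for i using f that by (simp add: bij_betw_inv_into_right)
  have inC: "?b i \<in> C" if "i < k" for i using img that by auto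
  show "cartan ?b k A"
  proof
    show "inj_on ?b {..<k}" using bij by (rule bij_betw_imp_inj_on)
  next
    show "z_indep (?b ` {..<k})" using zi img by simp
  next
    fix i j assume i: "i < k" and j: "j < k"
    show "?b i \<bullet> ?b j = Gm A i j"
    proof (cases "i = j")
      case True then show ?thesis using nn inC[OF i] by (simp add: Gm_def)
    next
      case False
      then have ne: "?b i \<noteq> ?b j" using fb i j by metis
      have e: "dual_edge (?b i) (?b j) \<longleftrightarrow> A i j" using ad inC[OF i] inC[OF j] fb[OF i] fb[OF j] by metis
      have "negform (?b i) (?b j) \<in> {0, 1}" using pr inC[OF i] inC[OF j] ne by blast
      then show ?thesis using e ne False unfolding Gm_def dual_edge_def negform_def by auto
    qed
  qed
  show "?b ` {..<k} = C" by (rule img)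
qed

lemma component:
  assumes zi: "z_indep C" and nn: "\<forall>u\<in>C. u \<bullet> u = 2"
    and pr: "\<forall>u\<in>C. \<forall>v\<in>C. u \<noteq> v \<longrightarrow> negform u v \<in> {0, 1}"
    and ade: "is_ADE C dual_edge" and y: "y \<in> dual_lattice (zspan C)"
  shows "canon_rep C (cls C y) - y \<in> zspan C"
proof -
  obtain f k where f: "bij_betw f C {..<k}" and
    ty: "(k \<ge> 1 \<and> (\<forall>u\<in>C. \<forall>v\<in>C. dual_edge u v \<longleftrightarrow> adjA (f u) (f v))) \<or>
      (k \<ge> 4 \<and> (\<forall>u\<in>C. \<forall>v\<in>C. dual_edge u v \<longleftrightarrow> adjD k (f u) (f v))) \<or>
      (k \<in> {6,7,8} \<and> (\<forall>u\<in>C. \<forall>v\<in>C. dual_edge u v \<longleftrightarrow> adjE k (f u) (f v)))"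
    using ade unfolding is_ADE_def by blast
  from ty show ?thesis
  proof (elim disjE conjE)
    assume k: "k \<ge> 1" and ad: "\<forall>u\<in>C. \<forall>v\<in>C. dual_edge u v \<longleftrightarrow> adjA (f u) (f v)"
    interpret cartan "inv_into C f" k adjA by (rule cartan_from[OF f zi nn pr ad])
    have img: "inv_into C f ` {..<k} = C" by (rule cartan_from[OF f zi nn pr ad])
    show ?thesis using typeA[OF refl k] y unfolding img by blast
  next
    assume k: "k \<ge> 4" and ad: "\<forall>u\<in>C. \<forall>v\<in>C. dual_edge u v \<longleftrightarrow> adjD k (f u) (f v)"
    interpret cartan "inv_into C f" k "adjD k" by (rule cartan_from[OF f zi nn pr ad])
    have img: "inv_into C f ` {..<k} = C" by (rule cartan_from[OF f zi nn pr ad])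
    show ?thesis using typeD[OF refl k] y unfolding img by blast
  next
    assume k: "k \<in> {6,7,8}" and ad: "\<forall>u\<in>C. \<forall>v\<in>C. dual_edge u v \<longleftrightarrow> adjE k (f u) (f v)"
    interpret cartan "inv_into C f" k "adjE k" by (rule cartan_from[OF f zi nn pr ad])
    have img: "inv_into C f ` {..<k} = C" by (rule cartan_from[OF f zi nn pr ad])
    show ?thesis using typeE[OF refl k] y unfolding img by blast
  qed
qed

lemma z_indep_subset: "z_indep S \<Longrightarrow> T \<subseteq> S \<Longrightarrow> z_indep T"
  unfolding z_indep_def by (meson order_trans)

theorem proposition7p4:
  fixes N Th :: "vec set" and x :: vec and d :: "vec set \<Rightarrow> vec"
  assumes "niemeier N" and "has_roots N"
    and "simple_root_system (lroots N) Th"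
    and "x \<in> N"
    and "\<forall>C\<in>comps Th. d C \<in> dual_lattice (zspan C)"
    and "x = (\<Sum>C\<in>comps Th. d C)"
  shows "(\<Sum>C\<in>comps Th. canon_rep C (cls C (d C))) \<in> N"
proof -
  obtain B :: "24 \<Rightarrow> vec" where NB: "N = zspan (range B)" using assms(1) unfolding niemeier_def by blast
  have fin: "finite Th" and sub: "Th \<subseteq> lroots N" and zz: "zspan Th = zspan (lroots N)"
    and zi: "z_indep Th" and pr: "\<forall>r\<in>Th. \<forall>r'\<in>Th. r \<noteq> r' \<longrightarrow> negform r r' \<in> {0, 1}"
    and ade: "\<forall>C\<in>comps Th. is_ADE C dual_edge"
    using assms(3) unfolding simple_root_system_def by auto
  have "zspan N \<subseteq> N" unfolding NB by (rule zspan_subset) simp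
  moreover have "zspan (lroots N) \<subseteq> zspan N" by (rule zspan_mono) (auto simp: lroots_def)
  ultimately have ThN: "zspan Th \<subseteq> N" using zz by simp
  have CTh: "C \<subseteq> Th" if "C \<in> comps Th" for C using that unfolding comps_def by auto
  have comp: "canon_rep C (cls C (d C)) - d C \<in> zspan Th" if C: "C \<in> comps Th" for C
  proof -
    have "canon_rep C (cls C (d C)) - d C \<in> zspan C"
    proof (rule component)
      show "z_indep C" using z_indep_subset[OF zi CTh[OF C]] .
      show "\<forall>u\<in>C. u \<bullet> u = 2" using CTh[OF C] sub unfolding lroots_def negform_def by auto
      show "\<forall>u\<in>C. \<forall>v\<in>C. u \<noteq> v \<longrightarrow> negform u v \<in> {0, 1}" using CTh[OF C] pr by blast
      show "is_ADE C dual_edge" using ade C by blast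
      show "d C \<in> dual_lattice (zspan C)" using assms(5) C by blast
    qed
    then show ?thesis using zspan_mono[OF CTh[OF C]] by blast
  qed
  have finC: "finite (comps Th)" unfolding comps_def using fin by simp
  have S: "(\<Sum>C\<in>comps Th. canon_rep C (cls C (d C)) - d C) \<in> zspan Th"
    by (rule zspan_sum[OF finC comp])
  have "(\<Sum>C\<in>comps Th. canon_rep C (cls C (d C))) = x + (\<Sum>C\<in>comps Th. canon_rep C (cls C (d C)) - d C)"
    unfolding assms(6) sum_subtractf by simp
  also have "\<dots> \<in> N" unfolding NB by (rule zspan_add) (use assms(4) S ThN NB in auto)
  finally show ?thesis .
qed

end
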